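(* Let $\epsilon>0$, $\epsilon_1=\epsilon/(2+\epsilon)$ and $\epsilon_5=\epsilon_1/(4k-2)$. For $u,v,w\in V\setminus D$, let $P=\pi_{G-D}(u,v)\circ\pi_{G-D}(v,w)$. If $P$ is $\epsilon_1$-far away from $V(H)$, then $P$ is an $\epsilon_5$-segment bipath.
   Context: $G=(V,E)$ is an undirected graph with $n\ge3$ vertices and real edge weights in $[1,W]$; shortest paths in every subgraph are assumed unique; $\pi_{G'}(x,y)$ is the shortest $x$-$y$ path in $G'$, $\delta_{G'}$ its length, $\circ$ path concatenation, $|P|$ weighted length, $P[a,b]$ the subpath between $a,b$, $G-R$ the graph with vertex set $R$ deleted. Let $k=\ln n$. For $R\subseteq V$, $S\subseteq V\setminus R$, an $S$-restricted tree cover of $G-R$ is a family $\{T(w):w\in S\}$ of trees, $T(w)$ a subtree of $G-R$ rooted at $w$, such that (i) for all $u\in S$, $v\in V\setminus R$ there is $w\in S$ with $u,v\in V(T(w))$ and $\mathrm{dep}_{T(w)}(u)+\mathrm{dep}_{T(w)}(v)\le(2k-1)\delta_{G-R}(u,v)$ ($\mathrm{dep}_T(x)$ = weighted distance from $x$ to the root); (ii) each vertex lies in at most $kn^{1/k}(\ln n+1)$ trees. A vertex of such a tree $T$ is a trunk vertex if it lies on the $T$-path between two vertices of $S$; $\mathrm{Trunk}(T)$ is the subtree induced by trunk vertices; $\mathrm{pdeg}_T(v)$ is the degree of $v$ in $\mathrm{Trunk}(T)$ (0 if not trunk). Fix an integer $d\ge2$, a constant $c\ge1$, $s=4e d^{c+1}\ln^2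 n+1$; $\mathrm{Hi}(\mathcal{C})$ is the set of vertices of pseudo-degree $>s$ in some tree of a tree cover $\mathcal{C}$. Fixed tree covers: $\mathcal{T}(S)$ ($S$-restricted, of $G$) and $\mathcal{T}_R(S)$ ($(S\setminus R)$-restricted, of $G-R$), $\mathcal{T}_\varnothing(S)=\mathcal{T}(S)$. Hierarchy tree: root $V$; a node $U$ is a leaf if $\mathrm{Hi}(\mathcal{T}(U))=\varnothing$, else it has children $W_1=\mathrm{Hi}(\mathcal{T}(U))$, $W_i=W_{i-1}\cup\mathrm{Hi}(\mathcal{T}_{W_{i-1}}(U))$ ($2\le i\le d$), recursively. Let $D\subseteq V$, $|D|\le d$, and fix a root-to-node path $V=U_1,\dots,U_p$ in the hierarchy tree, $U_{p+1}=\varnothing$, such that every $f\in D$ has pseudo-degree $\le s$ in every tree of $\mathcal{T}:=\bigcup_{i=1}^p\mathcal{T}_{U_{i+1}}(U_i)$. Level $l(v)$ = largest $l$ with $v\in U_l$; $G_i$ = subgraph induced by vertices of level $\le i$. Let $s_0,t_0\in V\setminus D$ be query vertices; for $f\in D$, $T\in\mathcal{T}$ containing $f$, $N_T(f)=\{\mathrm{parent}_T(f)\}\cup(\mathrm{children}_T(f)\cap\mathrm{Trunk}(T))$, $N(f)=\bigcup_TN_T(f)$, $V(H)=(\{s_0,t_0\}\cup\bigcup_{f\in D}N(f))\setminus D$. A path $P$ from $a$ to $b$ is $\eta$-far away from $V(H)$ if there are no $x\in P\setminus\{a,b\}$, $w\in V(H)$ with $\delta_{G-D}(x,w)\le\eta\min\{|P[a,x]|,|P[x,b]|\}$.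 $\eta$-segments of $P=(a=v_0,\dots,v_\ell=b)$: for $1\le i,j<\ell$, $v_i,v_j$ are in the same segment if either both $|P[a,v_i]|,|P[a,v_j]|\le|P|/2$ with equal $\lfloor\log_{1+\eta}|P[a,\cdot]|\rfloor$, or both $|P[v_i,b]|,|P[v_j,b]|<|P|/2$ with equal $\lfloor\log_{1+\eta}|P[\cdot,b]|\rfloor$; classes are contiguous, $a,b$ in no segment. $P$ is an $\eta$-segment bipath if for every $\eta$-segment $P[x,y]$ there are levels $1\le i,j\le p$ and $z\in P[x,y]$ with $P[x,y]=\pi_{G_i}(x,z)\circ\pi_{G_j}(z,y)$. *)

theory Defs
  imports Complex_Main
begin

text \<open>A subgraph is given by a
  vertex set X and an edge set F; the induced subgraph G[X] (e.g. G - R = G[V - R]) is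
  obtained with F = E (walks are required to stay inside X).\<close>

definition walk :: "'a set \<Rightarrow> 'a set set \<Rightarrow> 'a list \<Rightarrow> bool" where
  "walk X F p \<longleftrightarrow> p \<noteq> [] \<and> set p \<subseteq> X \<and> (\<forall>i. Suc i < length p \<longrightarrow> {p ! i, p ! Suc i} \<in> F)"

definition walk_betw :: "'a set \<Rightarrow> 'a set set \<Rightarrow> 'a \<Rightarrow> 'a \<Rightarrow> 'a list \<Rightarrow> bool" where
  "walk_betw X F x y p \<longleftrightarrow> walk X F p \<and> hd p = x \<and> last p = y"

definition wlen :: "('a set \<Rightarrow> real) \<Rightarrow> 'a list \<Rightarrow> real" where
  "wlen wt p = (\<Sum>i<length p - 1. wt {p ! i, p ! Suc i})"

definition reach :: "'a set \<Rightarrow> 'a set set \<Rightarrow> 'a \<Rightarrow> 'a \<Rightarrow> bool" where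
  "reach X F x y \<longleftrightarrow> (\<exists>p. walk_betw X F x y p)"

definition is_sp :: "'a set \<Rightarrow> 'a set set \<Rightarrow> ('a set \<Rightarrow> real) \<Rightarrow> 'a \<Rightarrow> 'a \<Rightarrow> 'a list \<Rightarrow> bool" where
  "is_sp X F wt x y p \<longleftrightarrow> walk_betw X F x y p \<and>
     (\<forall>q. walk_betw X F x y q \<longrightarrow> wlen wt p \<le> wlen wt q)"

definition sp :: "'a set \<Rightarrow> 'a set set \<Rightarrow> ('a set \<Rightarrow> real) \<Rightarrow> 'a \<Rightarrow> 'a \<Rightarrow> 'a list" where
  "sp X F wt x y = (THE p. is_sp X F wt x y p)"

text \<open>distance \<delta>_{(X,F)}(x,y) (meaningful when y is reachable from x)\<close>
definition dist :: "'a set \<Rightarrow> 'a set set \<Rightarrow> ('a set \<Rightarrow> real) \<Rightarrow> 'a \<Rightarrow> 'a \<Rightarrow> real" where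
  "dist X F wt x y = Inf {wlen wt q | q. walk_betw X F x y q}"

definition pcat :: "'a list \<Rightarrow> 'a list \<Rightarrow> 'a list" where
  "pcat p q = p @ tl q"

definition subpath :: "'a list \<Rightarrow> nat \<Rightarrow> nat \<Rightarrow> 'a list" where
  "subpath P a b = take (b - a + 1) (drop a P)"

definition wgraph :: "'a set \<Rightarrow> 'a set set \<Rightarrow> ('a set \<Rightarrow> real) \<Rightarrow> real \<Rightarrow> bool" where
  "wgraph V E wt W \<longleftrightarrow> finite V \<and> card V \<ge> 3 \<and>
     (\<forall>e\<in>E. \<exists>x y. e = {x, y} \<and> x \<noteq> y \<and> x \<in> V \<and> y \<in> V) \<and>
     (\<forall>e\<in>E. 1 \<le> wt e \<and> wt e \<le> W) \<and>
     (\<forall>X F x y. X \<subseteq> V \<longrightarrow> F \<subseteq> E \<longrightarrow> reach X F x y \<longrightarrow> (\<exists>!p. is_sp X F wt x y p))"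

definition kk :: "'a set \<Rightarrow> real" where
  "kk V = ln (real (card V))"

type_synonym 'a tree = "'a set \<times> 'a set set \<times> 'a"

definition tverts :: "'a tree \<Rightarrow> 'a set" where "tverts T = fst T"
definition tedges :: "'a tree \<Rightarrow> 'a set set" where "tedges T = fst (snd T)"
definition troot :: "'a tree \<Rightarrow> 'a" where "troot T = snd (snd T)"

definition is_tree :: "'a set \<Rightarrow> 'a set set \<Rightarrow> 'a tree \<Rightarrow> bool" where
  "is_tree X E T \<longleftrightarrow> finite (tverts T) \<and> tverts T \<subseteq> X \<and> tedges T \<subseteq> E \<and>
     (\<forall>e\<in>tedges T. e \<subseteq> tverts T) \<and> troot T \<in> tverts T \<and>
     (\<forall>x\<in>tverts T. reach (tverts T) (tedges T) (troot T) x) \<and>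
     card (tedges T) + 1 = card (tverts T)"

definition tpath :: "'a tree \<Rightarrow> 'a \<Rightarrow> 'a \<Rightarrow> 'a list" where
  "tpath T a b = (THE p. walk_betw (tverts T) (tedges T) a b p \<and> distinct p)"

definition dep :: "('a set \<Rightarrow> real) \<Rightarrow> 'a tree \<Rightarrow> 'a \<Rightarrow> real" where
  "dep wt T x = wlen wt (tpath T (troot T) x)"

definition tparent :: "'a tree \<Rightarrow> 'a \<Rightarrow> 'a" where
  "tparent T f = tpath T f (troot T) ! 1"

definition tchildren :: "'a tree \<Rightarrow> 'a \<Rightarrow> 'a set" where
  "tchildren T f = {c \<in> tverts T. c \<noteq> troot T \<and> tparent T c = f}"

definition trunk :: "'a tree \<Rightarrow> 'a set \<Rightarrow> 'a set" where
  "trunk T S = {x. \<exists>a\<in>S \<inter> tverts T. \<exists>b\<in>S \<inter> tverts T. x \<in> set (tpath T a b)}"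

definition pdeg :: "'a tree \<Rightarrow> 'a set \<Rightarrow> 'a \<Rightarrow> nat" where
  "pdeg T S v = (if v \<in> trunk T S then card {e \<in> tedges T. v \<in> e \<and> e \<subseteq> trunk T S} else 0)"

text \<open>C is an S-restricted tree cover of G - R (the family {C w : w \<in> S}).
  Condition (i) is required for pairs u,v connected in G - R.\<close>
definition tree_cover :: "'a set \<Rightarrow> 'a set set \<Rightarrow> ('a set \<Rightarrow> real) \<Rightarrow> 'a set \<Rightarrow> 'a set \<Rightarrow> ('a \<Rightarrow> 'a tree) \<Rightarrow> bool" where
  "tree_cover V E wt R S C \<longleftrightarrow> S \<subseteq> V - R \<and>
     (\<forall>x\<in>S. is_tree (V - R) E (C x) \<and> troot (C x) = x) \<and>
     (\<forall>u\<in>S. \<forall>v\<in>V - R. reach (V - R) E u v \<longrightarrow>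
        (\<exists>x\<in>S. u \<in> tverts (C x) \<and> v \<in> tverts (C x) \<and>
           dep wt (C x) u + dep wt (C x) v \<le> (2 * kk V - 1) * dist (V - R) E wt u v)) \<and>
     (\<forall>v. real (card {x\<in>S. v \<in> tverts (C x)})
            \<le> kk V * real (card V) powr (1 / kk V) * (ln (real (card V)) + 1))"

text \<open>TC R S is the fixed tree cover \<T>_R(S), an (S - R)-restricted tree cover of G - R;
  \<T>(S) = TC {} S.\<close>
definition fixed_covers :: "'a set \<Rightarrow> 'a set set \<Rightarrow> ('a set \<Rightarrow> real) \<Rightarrow> ('a set \<Rightarrow> 'a set \<Rightarrow> 'a \<Rightarrow> 'a tree) \<Rightarrow> bool" where
  "fixed_covers V E wt TC \<longleftrightarrow>
     (\<forall>R S. R \<subseteq> V \<longrightarrow> S \<subseteq> V \<longrightarrow> tree_cover V E wt R (S - R) (TC R S))"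

definition sbound :: "nat \<Rightarrow> real \<Rightarrow> nat \<Rightarrow> real" where
  "sbound d c n = 4 * exp 1 * real d powr (c + 1) * (ln (real n))\<^sup>2 + 1"

definition Hi :: "('a set \<Rightarrow> 'a set \<Rightarrow> 'a \<Rightarrow> 'a tree) \<Rightarrow> real \<Rightarrow> 'a set \<Rightarrow> 'a set \<Rightarrow> 'a set" where
  "Hi TC s R S = {v. \<exists>x\<in>S - R. real (pdeg (TC R S x) (S - R) v) > s}"

text \<open>W_0 = {} (so that \<T>_{W_0} = \<T>), W_1 = Hi(\<T>(U)), W_i = W_{i-1} \<union> Hi(\<T>_{W_{i-1}}(U))\<close>
primrec Wseq :: "('a set \<Rightarrow> 'a set \<Rightarrow> 'a \<Rightarrow> 'a tree) \<Rightarrow> real \<Rightarrow> 'a set \<Rightarrow> nat \<Rightarrow> 'a set" where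
  "Wseq TC s U 0 = {}"
| "Wseq TC s U (Suc i) = Wseq TC s U i \<union> Hi TC s (Wseq TC s U i) U"

definition hchild :: "('a set \<Rightarrow> 'a set \<Rightarrow> 'a \<Rightarrow> 'a tree) \<Rightarrow> real \<Rightarrow> nat \<Rightarrow> 'a set \<Rightarrow> 'a set \<Rightarrow> bool" where
  "hchild TC s d U U' \<longleftrightarrow> Hi TC s {} U \<noteq> {} \<and> (\<exists>i\<in>{1..d}. U' = Wseq TC s U i)"

text \<open>U_1,...,U_p is a root-to-node path of the hierarchy tree; U_{p+1} = {}\<close>
definition hpath :: "'a set \<Rightarrow> ('a set \<Rightarrow> 'a set \<Rightarrow> 'a \<Rightarrow> 'a tree) \<Rightarrow> real \<Rightarrow> nat \<Rightarrow> (nat \<Rightarrow> 'a set) \<Rightarrow> nat \<Rightarrow> bool" where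
  "hpath V TC s d U p \<longleftrightarrow> 1 \<le> p \<and> U 1 = V \<and> U (Suc p) = {} \<and>
     (\<forall>i. 1 \<le> i \<and> i < p \<longrightarrow> hchild TC s d (U i) (U (Suc i)))"

text \<open>index set of the trees of \<T> = \<Union>_{i=1..p} \<T>_{U_{i+1}}(U_i): the tree with index (i,x)
  is TC (U (i+1)) (U i) x, whose restriction set is U i - U (i+1).\<close>
definition tidx :: "(nat \<Rightarrow> 'a set) \<Rightarrow> nat \<Rightarrow> (nat \<times> 'a) set" where
  "tidx U p = {(i, x). 1 \<le> i \<and> i \<le> p \<and> x \<in> U i - U (Suc i)}"

definition D_ok :: "('a set \<Rightarrow> 'a set \<Rightarrow> 'a \<Rightarrow> 'a tree) \<Rightarrow> real \<Rightarrow> (nat \<Rightarrow> 'a set) \<Rightarrow> nat \<Rightarrow> 'a set \<Rightarrow> bool" where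
  "D_ok TC s U p D \<longleftrightarrow> (\<forall>(i, x)\<in>tidx U p. \<forall>f\<in>D.
      real (pdeg (TC (U (Suc i)) (U i) x) (U i - U (Suc i)) f) \<le> s)"

definition NT :: "'a tree \<Rightarrow> 'a set \<Rightarrow> 'a \<Rightarrow> 'a set" where
  "NT T S f = (if f \<noteq> troot T then {tparent T f} else {}) \<union> (tchildren T f \<inter> trunk T S)"

definition Nf :: "('a set \<Rightarrow> 'a set \<Rightarrow> 'a \<Rightarrow> 'a tree) \<Rightarrow> (nat \<Rightarrow> 'a set) \<Rightarrow> nat \<Rightarrow> 'a \<Rightarrow> 'a set" where
  "Nf TC U p f = (\<Union>(i, x)\<in>{(i, x)\<in>tidx U p. f \<in> tverts (TC (U (Suc i)) (U i) x)}.
      NT (TC (U (Suc i)) (U i) x) (U i - U (Suc i)) f)"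

definition VH :: "('a set \<Rightarrow> 'a set \<Rightarrow> 'a \<Rightarrow> 'a tree) \<Rightarrow> (nat \<Rightarrow> 'a set) \<Rightarrow> nat \<Rightarrow> 'a set \<Rightarrow> 'a \<Rightarrow> 'a \<Rightarrow> 'a set" where
  "VH TC U p D s0 t0 = ({s0, t0} \<union> (\<Union>f\<in>D. Nf TC U p f)) - D"

text \<open>levels and the graphs G_i (vertex sets; G_i is the induced subgraph)\<close>
definition level :: "(nat \<Rightarrow> 'a set) \<Rightarrow> nat \<Rightarrow> 'a \<Rightarrow> nat" where
  "level U p v = (GREATEST l. 1 \<le> l \<and> l \<le> p \<and> v \<in> U l)"

definition Lev :: "'a set \<Rightarrow> (nat \<Rightarrow> 'a set) \<Rightarrow> nat \<Rightarrow> nat \<Rightarrow> 'a set" where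
  "Lev V U p i = {v\<in>V. level U p v \<le> i}"

text \<open>P (from a = P!0 to b = last P) is \<eta>-far away from the set H (distances in G - D).
  Interior vertices are interior positions of P.\<close>
definition far_away :: "'a set \<Rightarrow> 'a set set \<Rightarrow> ('a set \<Rightarrow> real) \<Rightarrow> 'a set \<Rightarrow> 'a set \<Rightarrow> real \<Rightarrow> 'a list \<Rightarrow> bool" where
  "far_away V E wt D H \<eta> P \<longleftrightarrow> \<not> (\<exists>j. 0 < j \<and> j < length P - 1 \<and> (\<exists>y\<in>H.
      reach (V - D) E (P ! j) y \<and>
      dist (V - D) E wt (P ! j) y \<le> \<eta> * min (wlen wt (take (Suc j) P)) (wlen wt (drop j P))))"

definition same_seg :: "('a set \<Rightarrow> real) \<Rightarrow> real \<Rightarrow> 'a list \<Rightarrow> nat \<Rightarrow> nat \<Rightarrow> bool" where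
  "same_seg wt \<eta> P i j \<longleftrightarrow> 1 \<le> i \<and> i < length P - 1 \<and> 1 \<le> j \<and> j < length P - 1 \<and>
     ((wlen wt (take (Suc i) P) \<le> wlen wt P / 2 \<and> wlen wt (take (Suc j) P) \<le> wlen wt P / 2 \<and>
       \<lfloor>log (1 + \<eta>) (wlen wt (take (Suc i) P))\<rfloor> = \<lfloor>log (1 + \<eta>) (wlen wt (take (Suc j) P))\<rfloor>) \<or>
      (wlen wt (drop i P) < wlen wt P / 2 \<and> wlen wt (drop j P) < wlen wt P / 2 \<and>
       \<lfloor>log (1 + \<eta>) (wlen wt (drop i P))\<rfloor> = \<lfloor>log (1 + \<eta>) (wlen wt (drop j P))\<rfloor>))"

definition segments :: "('a set \<Rightarrow> real) \<Rightarrow> real \<Rightarrow> 'a list \<Rightarrow> nat set set" where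
  "segments wt \<eta> P = {{j. same_seg wt \<eta> P i j} | i. 1 \<le> i \<and> i < length P - 1}"

definition seg_bipath :: "'a set \<Rightarrow> 'a set set \<Rightarrow> ('a set \<Rightarrow> real) \<Rightarrow> (nat \<Rightarrow> 'a set) \<Rightarrow> nat \<Rightarrow> real \<Rightarrow> 'a list \<Rightarrow> bool" where
  "seg_bipath V E wt U p \<eta> P \<longleftrightarrow> (\<forall>C\<in>segments wt \<eta> P.
     \<exists>i j m. 1 \<le> i \<and> i \<le> p \<and> 1 \<le> j \<and> j \<le> p \<and> Min C \<le> m \<and> m \<le> Max C \<and>
       reach (Lev V U p i) E (P ! Min C) (P ! m) \<and>
       reach (Lev V U p j) E (P ! m) (P ! Max C) \<and>
       subpath P (Min C) (Max C) =
         pcat (sp (Lev V U p i) E wt (P ! Min C) (P ! m)) (sp (Lev V U p j) E wt (P ! m) (P ! Max C)))"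

end

theory Submission
  imports Defs
begin
lemma last_take_Suc: "i < length xs \<Longrightarrow> last (take (Suc i) xs) = xs ! i"
  by (simp add: take_Suc_conv_app_nth)

lemma walk_Nil[simp]: "\<not> walk X F []" by (simp add: walk_def)
lemma walk_single[simp]: "walk X F [x] \<longleftrightarrow> x \<in> X" by (simp add: walk_def)
lemma walk_Cons2: "walk X F (x # y # ys) \<longleftrightarrow> x \<in> X \<and> {x, y} \<in> F \<and> walk X F (y # ys)"
proof
  assume h: "walk X F (x # y # ys)"
  then have "{x,y} \<in> F" unfolding walk_def by force
  moreover have "walk X F (y # ys)" using h unfolding walk_def
    by auto
  ultimately show "x \<in> X \<and> {x, y} \<in> F \<and> walk X F (y # ys)" using h by (simp add: walk_def)
next
  assume h: "x \<in> X \<and> {x, y} \<in> F \<and> walk X F (y # ys)"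
  show "walk X F (x # y # ys)" unfolding walk_def
  proof (intro conjI allI impI)
    fix i assume "Suc i < length (x # y # ys)"
    then show "{(x # y # ys) ! i, (x # y # ys) ! Suc i} \<in> F" using h unfolding walk_def
      by (cases i) auto
  qed (use h in \<open>auto simp: walk_def\<close>)
qed

lemma wlen_Nil[simp]: "wlen wt [] = 0" by (simp add: wlen_def)
lemma wlen_single[simp]: "wlen wt [x] = 0" by (simp add: wlen_def)
lemma wlen_Cons2[simp]: "wlen wt (x # y # ys) = wt {x, y} + wlen wt (y # ys)"
  unfolding wlen_def by (simp add: sum.lessThan_Suc_shift del: sum.lessThan_Suc)

lemma wlen_append: "ys \<noteq> [] \<Longrightarrow> wlen wt (xs @ ys) = wlen wt xs + (if xs = [] then 0 else wt {last xs, hd ys}) + wlen wt ys"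
proof (induction xs)
  case Nil then show ?case by simp
next
  case (Cons x xs)
  then show ?case by (cases xs; cases ys) auto
qed

lemma wlen_pcat: "p \<noteq> [] \<Longrightarrow> q \<noteq> [] \<Longrightarrow> last p = hd q \<Longrightarrow> wlen wt (pcat p q) = wlen wt p + wlen wt q"
proof (induction p)
  case Nil then show ?case by simp
next
  case (Cons x xs)
  show ?case
  proof (cases xs)
    case Nil
    then show ?thesis using Cons by (cases q) (auto simp: pcat_def)
  next
    case (Cons y ys)
    then show ?thesis using Cons.IH Cons.prems by (auto simp: pcat_def)
  qed
qed

lemma wlen_Cons: "wlen wt (x # xs) = (if xs = [] then 0 else wt {x, hd xs} + wlen wt xs)"
  by (cases xs) auto

lemma wlen_rev: "wlen wt (rev p) = wlen wt p"
proof (induction p)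
  case (Cons x xs)
  then show ?case by (cases "xs = []") (auto simp: wlen_append wlen_Cons last_rev insert_commute)
qed auto

lemma walk_append: "walk X F xs \<Longrightarrow> walk X F ys \<Longrightarrow> {last xs, hd ys} \<in> F \<Longrightarrow> walk X F (xs @ ys)"
proof (induction xs)
  case Nil then show ?case by simp
next
  case (Cons x xs)
  then show ?case by (cases xs; cases ys) (auto simp: walk_Cons2)
qed

lemma walk_pcat: "walk X F p \<Longrightarrow> walk X F q \<Longrightarrow> last p = hd q \<Longrightarrow> walk X F (pcat p q)"
proof (induction p)
  case Nil then show ?case by simp
next
  case (Cons x xs)
  show ?case
  proof (cases xs)
    case Nil
    then show ?thesis using Cons by (cases q) (auto simp: pcat_def)
  next
    case (Cons y ys)
    then show ?thesis using Cons.IH Cons.prems by (auto simp: pcat_def walk_Cons2)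
  qed
qed

lemma walk_Cons: "walk X F (x # xs) \<longleftrightarrow> x \<in> X \<and> (xs \<noteq> [] \<longrightarrow> {x, hd xs} \<in> F \<and> walk X F xs)"
  by (cases xs) (auto simp: walk_Cons2)

lemma walk_rev: "walk X F p \<Longrightarrow> walk X F (rev p)"
proof (induction p)
  case (Cons x xs)
  then show ?case by (cases "xs = []") (auto simp: walk_Cons last_rev insert_commute intro!: walk_append)
qed auto

lemma walk_take: "walk X F p \<Longrightarrow> 0 < n \<Longrightarrow> walk X F (take n p)"
  unfolding walk_def by (auto dest: in_set_takeD)

lemma walk_drop: "walk X F p \<Longrightarrow> n < length p \<Longrightarrow> walk X F (drop n p)"
  unfolding walk_def by (auto dest: in_set_dropD simp: add.commute[of n])

lemma walk_mono: "walk X F p \<Longrightarrow> set p \<subseteq> Y \<Longrightarrow> walk Y F p"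
  unfolding walk_def by auto

lemma walk_nth: "walk X F p \<Longrightarrow> i < length p \<Longrightarrow> p ! i \<in> X"
  unfolding walk_def by auto

lemma walk_edge: "walk X F p \<Longrightarrow> Suc i < length p \<Longrightarrow> {p ! i, p ! Suc i} \<in> F"
  unfolding walk_def by auto

lemma walk_betw_pcat: "walk_betw X F x y p \<Longrightarrow> walk_betw X F y z q \<Longrightarrow> walk_betw X F x z (pcat p q)"
  unfolding walk_betw_def
  apply (auto intro!: walk_pcat)
   apply (cases p; simp add: pcat_def)
  apply (cases q; cases "tl q"; simp add: pcat_def walk_def)
  done

lemma walk_betw_rev: "walk_betw X F x y p \<Longrightarrow> walk_betw X F y x (rev p)"
  unfolding walk_betw_def by (auto intro!: walk_rev simp: hd_rev last_rev)

lemma reach_refl: "x \<in> X \<Longrightarrow> reach X F x x"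
  unfolding reach_def walk_betw_def by (rule exI[of _ "[x]"]) simp
lemma reach_sym: "reach X F x y \<Longrightarrow> reach X F y x"
  unfolding reach_def using walk_betw_rev by metis
lemma reach_trans: "reach X F x y \<Longrightarrow> reach X F y z \<Longrightarrow> reach X F x z"
  unfolding reach_def using walk_betw_pcat by metis
lemma reach_edge: "x \<in> X \<Longrightarrow> y \<in> X \<Longrightarrow> {x,y} \<in> F \<Longrightarrow> reach X F x y"
  unfolding reach_def walk_betw_def by (rule exI[of _ "[x,y]"]) (simp add: walk_Cons2)

lemma reach_steps:
  assumes "walk X F p" "i \<le> j" "j < length p"
    "\<And>l. i \<le> l \<Longrightarrow> l < j \<Longrightarrow> reach X F' (p ! l) (p ! Suc l)"
  shows "reach X F' (p ! i) (p ! j)"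
  using assms(2,3,4)
proof (induction j)
  case 0 then show ?case using assms(1) by (auto intro!: reach_refl walk_nth)
next
  case (Suc j)
  show ?case
  proof (cases "i = Suc j")
    case True then show ?thesis using assms(1) Suc by (auto intro!: reach_refl walk_nth)
  next
    case False
    then have "reach X F' (p ! i) (p ! j)" using Suc by auto
    then show ?thesis using Suc.prems False by (auto intro: reach_trans)
  qed
qed

lemma conn_card:
  assumes fin: "finite Vt" and edg: "\<forall>e\<in>Et. e \<subseteq> Vt" and r: "r \<in> Vt"
    and con: "\<forall>x\<in>Vt. reach Vt Et x r"
  shows "card Vt \<le> card Et + 1"
proof -
  define h where "h v = (LEAST n. \<exists>q. walk_betw Vt Et v r q \<and> length q = Suc n)" for v
  have hex: "\<exists>q. walk_betw Vt Et v r q \<and> length q = Suc (h v)" if vv: "v \<in> Vt" for v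
  proof -
    have "reach Vt Et v r" using con vv by blast
    then obtain q where q: "walk_betw Vt Et v r q" unfolding reach_def by blast
    then have "q \<noteq> []" by (auto simp: walk_betw_def)
    then have "\<exists>n. \<exists>q. walk_betw Vt Et v r q \<and> length q = Suc n" using q
      by (intro exI[of _ "length q - 1"] exI[of _ q]) auto
    then show ?thesis unfolding h_def by (rule LeastI_ex)
  qed
  have step: "\<exists>u. {v,u} \<in> Et \<and> h u < h v" if vv: "v \<in> Vt" "v \<noteq> r" for v
  proof -
    obtain q where q: "walk_betw Vt Et v r q" "length q = Suc (h v)" using hex vv by blast
    have "length q \<noteq> 1"
    proof
      assume "length q = 1"
      then obtain z where "q = [z]" by (cases q) auto
      then show False using q vv by (auto simp: walk_betw_def)
    qed
    then have l2: "Suc 0 < length q" using q by auto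
    have e: "{q ! 0, q ! 1} \<in> Et" using walk_edge[of Vt Et q 0] q l2 by (auto simp: walk_betw_def)
    have q0: "q ! 0 = v" using q by (cases q) (auto simp: walk_betw_def)
    have "walk_betw Vt Et (q ! 1) r (tl q)" using q l2
      by (cases q; cases "tl q") (auto simp: walk_betw_def walk_Cons)
    moreover have "length (tl q) = Suc (h v - 1)" using q l2 by auto
    ultimately have "h (q ! 1) \<le> h v - 1" unfolding h_def by (intro Least_le) (intro exI conjI)
    moreover have "h v \<ge> 1" using l2 q by auto
    ultimately show ?thesis using e q0 by (intro exI[of _ "q ! 1"]) auto
  qed
  define F where "F v = (SOME e. \<exists>u. e = {v,u} \<and> e \<in> Et \<and> h u < h v)" for v
  have Fp: "\<exists>u. F v = {v,u} \<and> F v \<in> Et \<and> h u < h v" if vv: "v \<in> Vt - {r}" for v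
  proof -
    obtain u where "{v,u} \<in> Et \<and> h u < h v" using step vv by blast
    then have "\<exists>e. \<exists>u. e = {v,u} \<and> e \<in> Et \<and> h u < h v" by blast
    then show ?thesis unfolding F_def by (rule someI_ex)
  qed
  have inj: "inj_on F (Vt - {r})"
  proof
    fix x y assume x: "x \<in> Vt - {r}" and y: "y \<in> Vt - {r}" and eq: "F x = F y"
    obtain u where u: "F x = {x,u}" "h u < h x" using Fp x by blast
    obtain u' where u': "F y = {y,u'}" "h u' < h y" using Fp y by blast
    show "x = y"
    proof (rule ccontr)
      assume "x \<noteq> y"
      then have "x = u' \<and> y = u" using eq u u' by (auto simp: doubleton_eq_iff)
      then show False using u u' by auto
    qed
  qed
  have finE: "finite Et" using finite_subset[of Et "Pow Vt"] edg fin by auto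
  have "F ` (Vt - {r}) \<subseteq> Et" using Fp by blast
  then have "card (Vt - {r}) \<le> card Et" using card_inj_on_le inj finE by blast
  then show ?thesis using r fin by auto
qed

lemma reach_reroute:
  assumes "reach X F v r" "reach X (F - {{x,y}}) x y"
  shows "reach X (F - {{x,y}}) v r"
proof -
  obtain q where q: "walk_betw X F v r q" using assms unfolding reach_def by blast
  have qne: "q \<noteq> []" using q by (auto simp: walk_betw_def)
  have "reach X (F - {{x,y}}) (q ! 0) (q ! (length q - 1))"
  proof (rule reach_steps[of X F q])
    show "walk X F q" using q by (simp add: walk_betw_def)
    fix l assume l: "0 \<le> l" "l < length q - 1"
    have e: "{q ! l, q ! Suc l} \<in> F" using q l walk_edge[of X F q l] by (auto simp: walk_betw_def)
    have vs: "q ! l \<in> X" "q ! Suc l \<in> X" using q l walk_nth[of X F q] by (auto simp: walk_betw_def)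
    show "reach X (F - {{x, y}}) (q ! l) (q ! Suc l)"
    proof (cases "{q ! l, q ! Suc l} = {x,y}")
      case True
      then show ?thesis using assms(2) reach_sym by (auto simp: doubleton_eq_iff)
    next
      case False
      then show ?thesis using e vs by (intro reach_edge) auto
    qed
  qed (use qne in auto)
  then show ?thesis using q qne by (auto simp: walk_betw_def hd_conv_nth last_conv_nth)
qed

lemma distinct_edge_eq:
  assumes "distinct p" "Suc l < length p" "Suc j < length p" "{p ! l, p ! Suc l} = {p ! j, p ! Suc j}"
  shows "l = j"
  using assms by (auto simp: doubleton_eq_iff nth_eq_iff_index_eq)

lemma tree_uniq:
  assumes fin: "finite Vt" and edg: "\<forall>e\<in>Et. e \<subseteq> Vt" and r: "r \<in> Vt"
    and con: "\<forall>x\<in>Vt. reach Vt Et r x" and cardE: "card Et + 1 = card Vt"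
    and p: "walk_betw Vt Et a b p" "distinct p"
    and q: "walk_betw Vt Et a b q" "distinct q"
  shows "p = q"
proof (rule ccontr)
  assume ne: "p \<noteq> q"
  have pne: "p \<noteq> []" and qne: "q \<noteq> []" using p q by (auto simp: walk_betw_def)
  have p0: "p ! 0 = a" and q0: "q ! 0 = a" using p q pne qne by (auto simp: walk_betw_def hd_conv_nth)
  have pl: "p ! (length p - 1) = b" and ql: "q ! (length q - 1) = b"
    using p q pne qne by (auto simp: walk_betw_def last_conv_nth)
  have ex: "\<exists>k. k < length p \<and> k < length q \<and> p ! k \<noteq> q ! k"
  proof (rule ccontr)
    assume "\<not> ?thesis"
    then have eq: "\<And>k. k < length p \<Longrightarrow> k < length q \<Longrightarrow> p ! k = q ! k" by auto
    consider "length p = length q" | "length p < length q" | "length q < length p" by linarith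
    then show False
    proof cases
      case 1 then show False using ne eq by (metis nth_equalityI)
    next
      case 2
      then have "q ! (length p - 1) = q ! (length q - 1)" using eq[of "length p - 1"] pl ql pne by auto
      then have "length p - 1 = length q - 1" using q(2) 2 pne by (auto simp: nth_eq_iff_index_eq)
      moreover have "0 < length p" using pne by simp
      ultimately show False using 2 by arith
    next
      case 3
      then have "p ! (length q - 1) = p ! (length p - 1)" using eq[of "length q - 1"] pl ql qne by auto
      then have "length q - 1 = length p - 1" using p(2) 3 qne by (auto simp: nth_eq_iff_index_eq)
      moreover have "0 < length q" using qne by simp
      ultimately show False using 3 by arith
    qed
  qed
  define k where "k = (LEAST k. k < length p \<and> k < length q \<and> p ! k \<noteq> q ! k)"
  have kp: "k < length p" "k < length q" "p ! k \<noteq> q ! k"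
    using LeastI_ex[OF ex] unfolding k_def by auto
  have kmin: "p ! j = q ! j" if "j < k" for j
    using not_less_Least[of j "\<lambda>k. k < length p \<and> k < length q \<and> p ! k \<noteq> q ! k"] that kp
    unfolding k_def[symmetric] by auto
  have k0: "k \<noteq> 0"
  proof
    assume "k = 0" then show False using kp p0 q0 by simp
  qed
  define x where "x = p ! (k - 1)"
  define y where "y = p ! k"
  have xq: "x = q ! (k - 1)" using kmin k0 unfolding x_def by auto
  have eE: "{x,y} \<in> Et" using walk_edge[of Vt Et p "k-1"] p kp k0 unfolding x_def y_def
    by (auto simp: walk_betw_def)
  define F' where "F' = Et - {{x,y}}"
  have wp: "walk Vt Et p" and wq: "walk Vt Et q" using p q by (auto simp: walk_betw_def)
  have pe: "reach Vt F' (p ! l) (p ! Suc l)" if "Suc l < length p" "l \<noteq> k - 1" for l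
  proof -
    have "{p ! l, p ! Suc l} \<noteq> {x,y}"
      using distinct_edge_eq[OF p(2) that(1), of "k-1"] that k0 kp unfolding x_def y_def by auto
    then show ?thesis using walk_edge[OF wp that(1)] walk_nth[OF wp] that unfolding F'_def
      by (intro reach_edge) auto
  qed
  have qe: "reach Vt F' (q ! l) (q ! Suc l)" if "Suc l < length q" for l
  proof -
    have "{q ! l, q ! Suc l} \<noteq> {x,y}"
    proof
      assume "{q ! l, q ! Suc l} = {x,y}"
      then consider "q ! l = q ! (k - 1)" "q ! Suc l = p ! k" | "q ! l = p ! k" "q ! Suc l = q ! (k - 1)"
        unfolding xq y_def by (auto simp: doubleton_eq_iff)
      then show False
      proof cases
        case 1
        then have "l = k - 1" using q(2) that kp by (auto simp: nth_eq_iff_index_eq)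
        then show False using 1 kp k0 by auto
      next
        case 2
        then have "Suc l = k - 1" using q(2) that kp by (auto simp: nth_eq_iff_index_eq)
        then have "p ! l = p ! k" using kmin[of l] 2 by auto
        then show False using p(2) kp \<open>Suc l = k - 1\<close> by (auto simp: nth_eq_iff_index_eq)
      qed
    qed
    then show ?thesis using walk_edge[OF wq that(1)] walk_nth[OF wq] that unfolding F'_def
      by (intro reach_edge) auto
  qed
  have r1: "reach Vt F' (p ! 0) (p ! (k - 1))"
    by (rule reach_steps[OF wp]) (use kp pe in auto)
  have r2: "reach Vt F' (q ! 0) (q ! (length q - 1))"
    by (rule reach_steps[OF wq]) (use qne qe in auto)
  have r3: "reach Vt F' (p ! k) (p ! (length p - 1))"
    by (rule reach_steps[OF wp]) (use kp pe k0 in auto)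
  have h1: "reach Vt F' x a" using reach_sym[OF r1] p0 x_def by simp
  have h2: "reach Vt F' a b" using r2 q0 ql by simp
  have h3: "reach Vt F' b y" using reach_sym[OF r3] pl y_def by simp
  have xy: "reach Vt (Et - {{x,y}}) x y" using reach_trans[OF reach_trans[OF h1 h2] h3] unfolding F'_def .
  have allr: "\<forall>z\<in>Vt. reach Vt F' z r"
  proof
    fix z assume z: "z \<in> Vt"
    have "reach Vt Et z r" using reach_sym[OF bspec[OF con z]] .
    then show "reach Vt F' z r" using reach_reroute[OF _ xy] unfolding F'_def by blast
  qed
  have "card Vt \<le> card F' + 1"
    by (rule conn_card[OF fin _ r allr]) (use edg in \<open>auto simp: F'_def\<close>)
  moreover have "finite Et" using finite_subset[of Et "Pow Vt"] edg fin by auto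
  moreover have "card Et > 0" using eE \<open>finite Et\<close> card_gt_0_iff by blast
  ultimately show False using eE cardE unfolding F'_def by (auto simp: card_Diff_singleton)
qed

lemma reach_distinct:
  assumes "reach X F a b"
  shows "\<exists>p. walk_betw X F a b p \<and> distinct p"
proof -
  obtain p0 where p0: "walk_betw X F a b p0" using assms unfolding reach_def by blast
  have "\<forall>p. walk_betw X F a b p \<and> length p = n \<longrightarrow> (\<exists>p. walk_betw X F a b p \<and> distinct p)" for n
  proof (induction n rule: less_induct)
    case (less n)
    show ?case
    proof (intro allI impI)
      fix p assume pn: "walk_betw X F a b p \<and> length p = n"
      show "\<exists>p. walk_betw X F a b p \<and> distinct p"
      proof (cases "distinct p")
        case True then show ?thesis using pn by blast
      next
        case False
        then obtain i j where ij: "i < j" "j < length p" "p ! i = p ! j"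
          by (metis distinct_conv_nth linorder_neqE_nat)
        have w: "walk X F p" and ne: "p \<noteq> []" using pn by (auto simp: walk_betw_def)
        have t: "walk_betw X F a (p ! i) (take (Suc i) p)"
          using pn ij ne walk_take[OF w, of "Suc i"] by (auto simp: walk_betw_def hd_take last_take_Suc hd_conv_nth)
        have d: "walk_betw X F (p ! i) b (drop j p)"
          using pn ij ne walk_drop[OF w, of j] by (auto simp: walk_betw_def hd_drop_conv_nth)
        have "walk_betw X F a b (pcat (take (Suc i) p) (drop j p))" by (rule walk_betw_pcat[OF t d])
        moreover have "length (pcat (take (Suc i) p) (drop j p)) < n"
          using ij pn by (auto simp: pcat_def)
        ultimately show ?thesis using less by blast
      qed
    qed
  qed
  then show ?thesis using p0 by blast
qed

lemma tree_facts:
  assumes "is_tree X E T"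
  shows "finite (tverts T)" "\<forall>e\<in>tedges T. e \<subseteq> tverts T" "troot T \<in> tverts T"
    "\<forall>x\<in>tverts T. reach (tverts T) (tedges T) (troot T) x" "card (tedges T) + 1 = card (tverts T)"
    "tverts T \<subseteq> X" "tedges T \<subseteq> E"
  using assms unfolding is_tree_def by auto

lemma tpath_props:
  assumes T: "is_tree X E T" and a: "a \<in> tverts T" and b: "b \<in> tverts T"
  shows "walk_betw (tverts T) (tedges T) a b (tpath T a b) \<and> distinct (tpath T a b)"
    and "walk_betw (tverts T) (tedges T) a b q \<Longrightarrow> distinct q \<Longrightarrow> q = tpath T a b"
proof -
  note tf = tree_facts[OF T]
  have uniq: "p = q" if "walk_betw (tverts T) (tedges T) a b p" "distinct p"
    "walk_betw (tverts T) (tedges T) a b q" "distinct q" for p q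
    using tree_uniq[OF tf(1) tf(2) tf(3) tf(4) tf(5) that] .
  have rab: "reach (tverts T) (tedges T) a b"
    using reach_trans[OF reach_sym[OF bspec[OF tf(4) a]] bspec[OF tf(4) b]] .
  then obtain p where p: "walk_betw (tverts T) (tedges T) a b p \<and> distinct p"
    using reach_distinct[OF rab] by blast
  have ex1: "\<exists>!p. walk_betw (tverts T) (tedges T) a b p \<and> distinct p"
    using p uniq by blast
  show "walk_betw (tverts T) (tedges T) a b (tpath T a b) \<and> distinct (tpath T a b)"
    unfolding tpath_def using theI'[OF ex1] .
  then show "walk_betw (tverts T) (tedges T) a b q \<Longrightarrow> distinct q \<Longrightarrow> q = tpath T a b"
    using uniq by blast
qed

lemma tpath_rev:
  assumes T: "is_tree X E T" and a: "a \<in> tverts T" and b: "b \<in> tverts T"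
  shows "tpath T b a = rev (tpath T a b)"
proof -
  have "walk_betw (tverts T) (tedges T) b a (rev (tpath T a b)) \<and> distinct (rev (tpath T a b))"
    using tpath_props(1)[OF T a b] walk_betw_rev by auto
  then show ?thesis using tpath_props(2)[OF T b a] by auto
qed

lemma tpath_take:
  assumes T: "is_tree X E T" and a: "a \<in> tverts T" and b: "b \<in> tverts T"
    and k: "k < length (tpath T a b)"
  shows "tpath T a (tpath T a b ! k) = take (Suc k) (tpath T a b)"
proof -
  let ?p = "tpath T a b"
  have p: "walk_betw (tverts T) (tedges T) a b ?p" "distinct ?p" using tpath_props(1)[OF T a b] by auto
  have kv: "?p ! k \<in> tverts T" using p k walk_nth by (auto simp: walk_betw_def)
  have "walk_betw (tverts T) (tedges T) a (?p ! k) (take (Suc k) ?p)"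
    using p k walk_take[of "tverts T" "tedges T" ?p "Suc k"]
    by (auto simp: walk_betw_def last_take_Suc)
  moreover have "distinct (take (Suc k) ?p)" using p by auto
  ultimately show ?thesis using tpath_props(2)[OF T a kv] by auto
qed

lemma wlen_td:
  assumes "a + n \<le> length P"
  shows "wlen wt (take n (drop a P)) = (\<Sum>l\<in>{a..<a+n-1}. wt {P ! l, P ! Suc l})"
proof -
  have len: "length (take n (drop a P)) = n" using assms by auto
  have "wlen wt (take n (drop a P)) = (\<Sum>l<n-1. wt {P ! (l + a), P ! Suc (l + a)})"
    unfolding wlen_def len using assms by (intro sum.cong) (auto simp: add.commute)
  also have "\<dots> = (\<Sum>l\<in>{0+a..<(n-1)+a}. wt {P ! l, P ! Suc l})"
    by (subst sum.shift_bounds_nat_ivl) (simp add: lessThan_atLeast0)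
  also have "{0+a..<(n-1)+a} = {a..<a+n-1}" by auto
  finally show ?thesis .
qed

lemma wlen_eq_sum: "wlen wt P = (\<Sum>l\<in>{0..<length P - 1}. wt {P ! l, P ! Suc l})"
  unfolding wlen_def by (simp add: lessThan_atLeast0)

lemma wlen_take: "n \<le> length P \<Longrightarrow> wlen wt (take n P) = (\<Sum>l\<in>{0..<n-1}. wt {P ! l, P ! Suc l})"
  using wlen_td[of 0 n P wt] by simp

lemma wlen_drop: "a \<le> length P \<Longrightarrow> wlen wt (drop a P) = (\<Sum>l\<in>{a..<length P - 1}. wt {P ! l, P ! Suc l})"
  using wlen_td[of a "length P - a" P wt] by (cases "a = length P") auto

lemma walk_wt_nonneg: "walk X F P \<Longrightarrow> \<forall>e\<in>F. 0 \<le> wt e \<Longrightarrow> l \<in> {a..<length P - 1} \<Longrightarrow> 0 \<le> wt {P ! l, P ! Suc l}"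
  using walk_edge[of X F P l] by auto

lemma wlen_nonneg: "walk X F P \<Longrightarrow> \<forall>e\<in>F. 0 \<le> wt e \<Longrightarrow> 0 \<le> wlen wt P"
  unfolding wlen_eq_sum by (rule sum_nonneg) (rule walk_wt_nonneg[where a=0], auto)

lemma wlen_take_le: "walk X F P \<Longrightarrow> \<forall>e\<in>F. 0 \<le> wt e \<Longrightarrow> wlen wt (take n P) \<le> wlen wt P"
proof (cases "n \<le> length P")
  case True
  assume w: "walk X F P" "\<forall>e\<in>F. 0 \<le> wt e"
  show ?thesis
    apply (subst wlen_take[OF True]) apply (subst wlen_eq_sum[of wt P])
    by (rule sum_mono2) (use True walk_wt_nonneg[OF w, where a=0] in auto)
qed simp

lemma wlen_drop_le: "walk X F P \<Longrightarrow> \<forall>e\<in>F. 0 \<le> wt e \<Longrightarrow> wlen wt (drop n P) \<le> wlen wt P"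
proof (cases "n \<le> length P")
  case True
  assume w: "walk X F P" "\<forall>e\<in>F. 0 \<le> wt e"
  show ?thesis
    apply (subst wlen_drop[OF True]) apply (subst wlen_eq_sum[of wt P])
    by (rule sum_mono2) (use True walk_wt_nonneg[OF w, where a=0] in auto)
next
  case False
  assume w: "walk X F P" "\<forall>e\<in>F. 0 \<le> wt e"
  then show ?thesis using False wlen_nonneg[OF w] by simp
qed

lemma set_drop_nth: "x \<in> set (drop n xs) \<Longrightarrow> \<exists>j. n \<le> j \<and> j < length xs \<and> x = xs ! j"
  by (auto simp: in_set_conv_nth) (metis add.commute le_add2 less_diff_conv nth_drop)

lemma set_take_nth: "x \<in> set (take n xs) \<Longrightarrow> \<exists>j. j < n \<and> j < length xs \<and> x = xs ! j"
  by (auto simp: in_set_conv_nth)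

lemma tree_D:
  assumes T: "is_tree X E T" and wnn: "\<forall>e\<in>tedges T. 0 \<le> wt e"
    and rS: "troot T \<in> S" and zS: "z \<in> S" and zT: "z \<in> tverts T" and zD: "z \<notin> D"
    and fD: "f \<in> D" and fT: "f \<in> tverts T"
  shows "\<exists>f'\<in>D. \<exists>w'. f' \<in> tverts T \<and> w' \<in> NT T S f' \<and> w' \<notin> D \<and>
           (\<exists>q. walk_betw (tverts T - D) (tedges T) z w' q \<and> wlen wt q \<le> dep wt T z + dep wt T f)"
proof -
  note tf = tree_facts[OF T]
  define r where "r = troot T"
  have rT: "r \<in> tverts T" using tf r_def by auto
  define pz where "pz = tpath T r z"
  define pf where "pf = tpath T r f"
  have pz: "walk_betw (tverts T) (tedges T) r z pz" "distinct pz" using tpath_props(1)[OF T rT zT] pz_def by auto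
  have pf: "walk_betw (tverts T) (tedges T) r f pf" "distinct pf" using tpath_props(1)[OF T rT fT] pf_def by auto
  have wz: "walk (tverts T) (tedges T) pz" and wf: "walk (tverts T) (tedges T) pf"
    using pz pf by (auto simp: walk_betw_def)
  have pzne: "pz \<noteq> []" and pfne: "pf \<noteq> []" using wz wf by auto
  have pz0: "pz ! 0 = r" and pf0: "pf ! 0 = r" using pz pf pzne pfne by (auto simp: walk_betw_def hd_conv_nth)
  have pzl: "pz ! (length pz - 1) = z" and pfl: "pf ! (length pf - 1) = f"
    using pz pf pzne pfne by (auto simp: walk_betw_def last_conv_nth)
  have depz: "dep wt T z = wlen wt pz" and depf: "dep wt T f = wlen wt pf"
    unfolding dep_def pz_def pf_def r_def by auto
  have nnz: "0 \<le> wlen wt pz" and nnf: "0 \<le> wlen wt pf"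
    using wlen_nonneg[OF wz wnn] wlen_nonneg[OF wf wnn] by auto
  show ?thesis
  proof (cases "\<exists>k. k < length pz \<and> pz ! k \<in> D")
    case True
    define k where "k = (GREATEST k. k < length pz \<and> pz ! k \<in> D)"
    obtain k0 where k0: "k0 < length pz \<and> pz ! k0 \<in> D" using True by blast
    have kp: "k < length pz \<and> pz ! k \<in> D"
      unfolding k_def by (rule GreatestI_nat[of _ k0 "length pz"]) (use k0 in auto)
    have kmax: "pz ! j \<notin> D" if "k < j" "j < length pz" for j
    proof
      assume "pz ! j \<in> D"
      then have "j \<le> k" unfolding k_def by (intro Greatest_le_nat[of _ j "length pz"]) (use that in auto)
      then show False using that by auto
    qed
    have "k \<noteq> length pz - 1" using kp pzl zD by auto
    then have sk: "Suc k < length pz" using kp by auto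
    define f' where "f' = pz ! k"
    define w' where "w' = pz ! Suc k"
    have w'T: "w' \<in> tverts T" using walk_nth[OF wz sk] w'_def by auto
    have f'T: "f' \<in> tverts T" using walk_nth[OF wz] kp f'_def by auto
    have w'r: "w' \<noteq> troot T"
    proof
      assume "w' = troot T"
      then have "pz ! Suc k = pz ! 0" using pz0 w'_def r_def by auto
      then show False using nth_eq_iff_index_eq[OF pz(2) sk, of 0] pzne by auto
    qed
    have tpw: "tpath T r w' = take (Suc (Suc k)) pz"
      using tpath_take[OF T rT zT, of "Suc k"] sk unfolding pz_def w'_def by auto
    have "tparent T w' = f'"
      unfolding tparent_def r_def[symmetric] tpath_rev[OF T rT w'T] tpw
      using sk by (simp add: rev_nth f'_def)
    then have ch: "w' \<in> tchildren T f'" unfolding tchildren_def using w'T w'r by auto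
    have "tpath T z r = rev pz" using tpath_rev[OF T rT zT] pz_def by auto
    then have "w' \<in> set (tpath T z r)" using sk w'_def by auto
    then have tr: "w' \<in> trunk T S" unfolding trunk_def using zS zT rS rT r_def by auto
    have NT: "w' \<in> NT T S f'" unfolding NT_def using ch tr by auto
    define q where "q = rev (drop (Suc k) pz)"
    have "walk (tverts T) (tedges T) (drop (Suc k) pz)" using walk_drop[OF wz sk] .
    moreover have "set (drop (Suc k) pz) \<subseteq> tverts T - D"
    proof
      fix x assume xin: "x \<in> set (drop (Suc k) pz)"
      obtain j where j: "Suc k \<le> j" "j < length pz" "x = pz ! j" using set_drop_nth[OF xin] by blast
      then show "x \<in> tverts T - D" using kmax[of j] walk_nth[OF wz] by auto
    qed
    ultimately have "walk (tverts T - D) (tedges T) (drop (Suc k) pz)" using walk_mono by blast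
    then have "walk_betw (tverts T - D) (tedges T) z w' q"
      unfolding q_def walk_betw_def using walk_rev sk pz pzne
      by (auto simp: hd_rev last_rev hd_drop_conv_nth w'_def walk_betw_def)
    moreover have "wlen wt q \<le> dep wt T z + dep wt T f"
      unfolding q_def wlen_rev depz depf using wlen_drop_le[OF wz wnn, of "Suc k"] nnf by auto
    moreover have "w' \<notin> D" using kmax[of "Suc k"] sk w'_def by auto
    moreover have "f' \<in> D" using kp f'_def by simp
    ultimately show ?thesis using f'T NT by (intro bexI[of _ f'] exI[of _ w'] conjI exI[of _ q]) auto
  next
    case False
    have ex: "\<exists>k. k < length pf \<and> pf ! k \<in> D" using pfl fD pfne by (intro exI[of _ "length pf - 1"]) auto
    define k where "k = (LEAST k. k < length pf \<and> pf ! k \<in> D)"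
    have kp: "k < length pf \<and> pf ! k \<in> D" using LeastI_ex[OF ex] k_def by simp
    have kmin: "pf ! j \<notin> D" if "j < k" for j
      using not_less_Least[of j "\<lambda>k. k < length pf \<and> pf ! k \<in> D"] that kp unfolding k_def[symmetric] by auto
    have k0: "k \<noteq> 0"
    proof
      assume "k = 0"
      then have "pz ! 0 \<in> D" using kp pf0 pz0 by auto
      then show False using False pzne by auto
    qed
    define f' where "f' = pf ! k"
    define w' where "w' = pf ! (k - 1)"
    have f'T: "f' \<in> tverts T" using walk_nth[OF wf] kp f'_def by auto
    have f'r: "f' \<noteq> troot T"
    proof
      assume "f' = troot T"
      then have "pf ! k = pf ! 0" using pf0 f'_def r_def by auto
      then show False using nth_eq_iff_index_eq[OF pf(2), of k 0] kp k0 pfne by auto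
    qed
    have tpf: "tpath T r f' = take (Suc k) pf"
      using tpath_take[OF T rT fT, of k] kp unfolding pf_def f'_def by auto
    have "tparent T f' = w'"
      unfolding tparent_def r_def[symmetric] tpath_rev[OF T rT f'T] tpf
      using kp k0 by (simp add: rev_nth w'_def)
    then have NT: "w' \<in> NT T S f'" unfolding NT_def using f'r by auto
    define q where "q = pcat (rev pz) (take k pf)"
    have w1: "walk (tverts T - D) (tedges T) (rev pz)"
    proof (rule walk_mono[OF walk_rev[OF wz]])
      show "set (rev pz) \<subseteq> tverts T - D"
      proof
        fix x assume "x \<in> set (rev pz)"
        then obtain j where "j < length pz" "x = pz ! j" by (auto simp: in_set_conv_nth)
        then show "x \<in> tverts T - D" using False walk_nth[OF wz] by auto
      qed
    qed
    have w2: "walk (tverts T - D) (tedges T) (take k pf)"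
    proof (rule walk_mono[OF walk_take[OF wf]])
      show "set (take k pf) \<subseteq> tverts T - D"
      proof
        fix x assume xin: "x \<in> set (take k pf)"
        obtain j where "j < k" "j < length pf" "x = pf ! j" using set_take_nth[OF xin] by blast
        then show "x \<in> tverts T - D" using kmin walk_nth[OF wf] by auto
      qed
    qed (use k0 in auto)
    have lh: "last (rev pz) = hd (take k pf)" using pzne pfne k0 pz0 pf0 by (auto simp: last_rev hd_conv_nth)
    have "walk_betw (tverts T - D) (tedges T) z w' q"
      unfolding q_def walk_betw_def
    proof (intro conjI)
      show "walk (tverts T - D) (tedges T) (pcat (rev pz) (take k pf))" by (rule walk_pcat[OF w1 w2 lh])
      show "hd (pcat (rev pz) (take k pf)) = z" using pzne pzl by (simp add: pcat_def hd_rev last_conv_nth)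
      show "last (pcat (rev pz) (take k pf)) = w'"
      proof (cases "k = 1")
        case True
        moreover have "tl (take 1 pf) = []" by (cases pf) auto
        ultimately show ?thesis using pzne pz0 pf0 w'_def by (simp add: pcat_def last_rev hd_conv_nth)
      next
        case False
        have "length (tl (take k pf)) = k - 1" using kp by simp
        then have "tl (take k pf) \<noteq> []" using k0 False by (metis One_nat_def length_0_conv less_one nat_neq_iff zero_less_diff)
        then have "last (pcat (rev pz) (take k pf)) = last (take k pf)" by (simp add: pcat_def last_tl)
        also have "\<dots> = pf ! (k - 1)" using last_take_Suc[of "k-1" pf] kp k0 by auto
        finally show ?thesis using w'_def by simp
      qed
    qed
    moreover have "wlen wt q \<le> dep wt T z + dep wt T f"
      unfolding q_def depz depf
      using wlen_pcat[of "rev pz" "take k pf" wt] pzne pfne k0 lh wlen_take_le[OF wf wnn, of k]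
      by (auto simp: wlen_rev)
    moreover have "w' \<notin> D" using kmin[of "k - 1"] k0 w'_def by auto
    moreover have "f' \<in> D" using kp f'_def by simp
    ultimately show ?thesis using f'T NT by (intro bexI[of _ f'] exI[of _ w'] conjI exI[of _ q]) auto
  qed
qed

lemma wg_facts:
  assumes "wgraph V E wt W"
  shows "finite V" "card V \<ge> 3" "\<forall>e\<in>E. \<exists>x y. e = {x,y} \<and> x \<noteq> y \<and> x \<in> V \<and> y \<in> V"
    "\<forall>e\<in>E. 1 \<le> wt e" "\<forall>e\<in>E. 0 \<le> wt e"
    "\<And>X x y. X \<subseteq> V \<Longrightarrow> reach X E x y \<Longrightarrow> \<exists>!p. is_sp X E wt x y p"
  using assms unfolding wgraph_def by (auto intro: order.trans[OF zero_le_one])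

lemma sp_is_sp:
  assumes "wgraph V E wt W" "X \<subseteq> V" "reach X E x y"
  shows "is_sp X E wt x y (sp X E wt x y)"
  unfolding sp_def using theI'[OF wg_facts(6)[OF assms]] .

lemma sp_eq:
  assumes "wgraph V E wt W" "X \<subseteq> V" "is_sp X E wt x y q"
  shows "sp X E wt x y = q"
proof -
  have "reach X E x y" using assms(3) unfolding is_sp_def reach_def by blast
  then show ?thesis unfolding sp_def using the1_equality[OF wg_facts(6)[OF assms(1,2)] assms(3)] by blast
qed

lemma dist_le:
  assumes "\<forall>e\<in>F. 0 \<le> wt e" "walk_betw X F x y q"
  shows "dist X F wt x y \<le> wlen wt q"
  unfolding dist_def
proof (rule cInf_lower)
  show "wlen wt q \<in> {wlen wt q |q. walk_betw X F x y q}" using assms(2) by blast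
  show "bdd_below {wlen wt q |q. walk_betw X F x y q}"
    by (rule bdd_belowI[of _ 0]) (use wlen_nonneg assms(1) in \<open>auto simp: walk_betw_def\<close>)
qed

lemma walk_edges_mono: "walk X F p \<Longrightarrow> F \<subseteq> F' \<Longrightarrow> walk X F' p"
  unfolding walk_def by auto

lemma subpath_len: "i \<le> j \<Longrightarrow> j < length P \<Longrightarrow> length (subpath P i j) = j - i + 1"
  unfolding subpath_def by auto

lemma subpath_nth: "i \<le> j \<Longrightarrow> j < length P \<Longrightarrow> t \<le> j - i \<Longrightarrow> subpath P i j ! t = P ! (i + t)"
  unfolding subpath_def by auto

lemma subpath_hd: "i \<le> j \<Longrightarrow> j < length P \<Longrightarrow> hd (subpath P i j) = P ! i"
  unfolding subpath_def by (auto simp: hd_conv_nth)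

lemma subpath_last: "i \<le> j \<Longrightarrow> j < length P \<Longrightarrow> last (subpath P i j) = P ! j"
proof -
  assume a: "i \<le> j" "j < length P"
  have "subpath P i j \<noteq> []" using a unfolding subpath_def by auto
  then have "last (subpath P i j) = subpath P i j ! (j - i)" using subpath_len[OF a] by (simp add: last_conv_nth)
  also have "\<dots> = P ! j" using subpath_nth[OF a, of "j - i"] a by simp
  finally show ?thesis .
qed

lemma subpath_ne: "i \<le> j \<Longrightarrow> j < length P \<Longrightarrow> subpath P i j \<noteq> []"
  unfolding subpath_def by auto

lemma subpath_set: "i \<le> j \<Longrightarrow> j < length P \<Longrightarrow> x \<in> set (subpath P i j) \<Longrightarrow> \<exists>l. i \<le> l \<and> l \<le> j \<and> x = P ! l"
proof -
  assume a: "i \<le> j" "j < length P" "x \<in> set (subpath P i j)"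
  then obtain t where t: "t < length (subpath P i j)" "x = subpath P i j ! t" by (auto simp: in_set_conv_nth)
  then show ?thesis using a subpath_len[OF a(1,2)] subpath_nth[OF a(1,2), of t] by (intro exI[of _ "i + t"]) auto
qed

lemma wlen_subpath: "i \<le> j \<Longrightarrow> j < length P \<Longrightarrow> wlen wt (subpath P i j) = (\<Sum>l\<in>{i..<j}. wt {P ! l, P ! Suc l})"
  unfolding subpath_def using wlen_td[of i "j - i + 1" P wt] by auto

lemma walk_subpath: "walk X F P \<Longrightarrow> i \<le> j \<Longrightarrow> j < length P \<Longrightarrow> walk X F (subpath P i j)"
  unfolding subpath_def by (intro walk_take walk_drop) auto

lemma wlen_split3:
  assumes "i \<le> j" "j < length P"
  shows "wlen wt P = wlen wt (take (Suc i) P) + wlen wt (subpath P i j) + wlen wt (drop j P)"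
proof -
  have "wlen wt P = (\<Sum>l\<in>{0..<length P - 1}. wt {P ! l, P ! Suc l})" by (rule wlen_eq_sum)
  also have "\<dots> = (\<Sum>l\<in>{0..<i}. wt {P ! l, P ! Suc l}) + (\<Sum>l\<in>{i..<j}. wt {P ! l, P ! Suc l})
     + (\<Sum>l\<in>{j..<length P - 1}. wt {P ! l, P ! Suc l})"
    using assms by (simp add: sum.atLeastLessThan_concat)
  finally show ?thesis using assms wlen_take[of "Suc i" P wt] wlen_subpath[OF assms, of wt] wlen_drop[of j P wt] by simp
qed

lemma sub_sp:
  assumes sp: "is_sp X F wt x y P" and nn: "\<forall>e\<in>F. 0 \<le> wt e" and ij: "i \<le> j" "j < length P"
  shows "is_sp X F wt (P ! i) (P ! j) (subpath P i j)"
  unfolding is_sp_def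
proof (intro conjI allI impI)
  have wP: "walk X F P" and hP: "hd P = x" and lP: "last P = y" using sp by (auto simp: is_sp_def walk_betw_def)
  have Pne: "P \<noteq> []" using wP by auto
  show "walk_betw X F (P ! i) (P ! j) (subpath P i j)"
    unfolding walk_betw_def using walk_subpath[OF wP ij] subpath_hd[OF ij] subpath_last[OF ij] by auto
  fix q assume q: "walk_betw X F (P ! i) (P ! j) q"
  have t: "walk_betw X F x (P ! i) (take (Suc i) P)"
    using walk_take[OF wP, of "Suc i"] ij hP Pne by (auto simp: walk_betw_def last_take_Suc hd_conv_nth)
  have d: "walk_betw X F (P ! j) y (drop j P)"
    using walk_drop[OF wP, of j] ij lP by (auto simp: walk_betw_def hd_drop_conv_nth)
  have w: "walk_betw X F x y (pcat (pcat (take (Suc i) P) q) (drop j P))"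
    by (rule walk_betw_pcat[OF walk_betw_pcat[OF t q] d])
  then have "wlen wt P \<le> wlen wt (pcat (pcat (take (Suc i) P) q) (drop j P))" using sp by (auto simp: is_sp_def)
  also have "\<dots> = wlen wt (take (Suc i) P) + wlen wt q + wlen wt (drop j P)"
  proof -
    have tq: "walk_betw X F x (P ! j) (pcat (take (Suc i) P) q)" by (rule walk_betw_pcat[OF t q])
    have ne: "take (Suc i) P \<noteq> []" "q \<noteq> []" "drop j P \<noteq> []" "pcat (take (Suc i) P) q \<noteq> []"
      using t q d tq by (auto simp: walk_betw_def)
    have "wlen wt (pcat (pcat (take (Suc i) P) q) (drop j P)) = wlen wt (pcat (take (Suc i) P) q) + wlen wt (drop j P)"
      using wlen_pcat[OF ne(4) ne(3)] tq d by (auto simp: walk_betw_def)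
    moreover have "wlen wt (pcat (take (Suc i) P) q) = wlen wt (take (Suc i) P) + wlen wt q"
      using wlen_pcat[OF ne(1) ne(2)] t q by (auto simp: walk_betw_def)
    ultimately show ?thesis by simp
  qed
  finally show "wlen wt (subpath P i j) \<le> wlen wt q" using wlen_split3[OF ij, of wt] by simp
qed

lemma floor_log_lemma:
  fixes B x y :: real
  assumes B: "B > 1" and x: "0 < x" "x \<le> y" and fl: "\<lfloor>log B x\<rfloor> = \<lfloor>log B y\<rfloor>"
  shows "y - x < (B - 1) * x"
proof -
  define t where "t = real_of_int \<lfloor>log B x\<rfloor>"
  have "t \<le> log B x" unfolding t_def by simp
  then have "B powr t \<le> B powr (log B x)" using B by (intro powr_mono) auto
  then have bx: "B powr t \<le> x" using B x by simp
  have "log B y < t + 1" unfolding t_def fl by linarith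
  then have "B powr (log B y) < B powr (t + 1)" using B by (intro powr_less_mono) auto
  then have by': "y < B powr (t + 1)" using B x by simp
  have "B powr (t + 1) = B * B powr t" using B by (simp add: powr_add)
  then have "y - x < (B - 1) * B powr t" using by' bx by (simp add: algebra_simps)
  also have "\<dots> \<le> (B - 1) * x" using bx B by (intro mult_left_mono) auto
  finally show ?thesis .
qed

lemma seg_lemma:
  fixes P :: "'a list" and \<eta> :: real
  assumes eta: "\<eta> > 0" and g1: "\<forall>l. Suc l < length P \<longrightarrow> 1 \<le> wt {P ! l, P ! Suc l}"
    and i0: "1 \<le> i0" "i0 < length P - 1"
    and C: "C = {j. same_seg wt \<eta> P i0 j}"
  shows "finite C \<and> C \<noteq> {} \<and> 1 \<le> Min C \<and> Min C \<le> Max C \<and> Max C < length P - 1 \<and>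
     (\<exists>Lm. wlen wt (subpath P (Min C) (Max C)) < \<eta> * Lm \<and>
        (\<forall>j. Min C \<le> j \<and> j \<le> Max C \<longrightarrow> Lm \<le> min (wlen wt (take (Suc j) P)) (wlen wt (drop j P))))"
proof -
  define N where "N = length P"
  define g where "g l = wt {P ! l, P ! Suc l}" for l
  define pre where "pre j = (\<Sum>l\<in>{0..<j}. g l)" for j
  define suf where "suf j = (\<Sum>l\<in>{j..<N - 1}. g l)" for j
  define tot where "tot = (\<Sum>l\<in>{0..<N - 1}. g l)"
  have g1': "1 \<le> g l" if "l < N - 1" for l using g1 that unfolding g_def N_def by auto
  have wpre: "wlen wt (take (Suc j) P) = pre j" if "j < N" for j
    using wlen_take[of "Suc j" P wt] that unfolding pre_def g_def N_def by auto
  have wsuf: "wlen wt (drop j P) = suf j" if "j \<le> N" for j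
    using wlen_drop[of j P wt] that unfolding suf_def g_def N_def by auto
  have wtot: "wlen wt P = tot" using wlen_eq_sum[of wt P] unfolding tot_def g_def N_def by auto
  have ps: "pre j + suf j = tot" if "j \<le> N - 1" for j
    unfolding pre_def suf_def tot_def using that by (simp add: sum.atLeastLessThan_concat)
  have pmono: "pre j - pre i = (\<Sum>l\<in>{i..<j}. g l)" if "i \<le> j" for i j
    unfolding pre_def using that sum.atLeastLessThan_concat[of 0 i j g] by simp
  have gnn: "0 \<le> (\<Sum>l\<in>{i..<j}. g l)" if "j \<le> N - 1" for i j
    using g1' that by (intro sum_nonneg) (auto intro: order.trans[OF zero_le_one])
  have pre_pos: "1 \<le> pre j" if "1 \<le> j" "j \<le> N - 1" for j
  proof -
    have "pre j = g 0 + (\<Sum>l\<in>{1..<j}. g l)" unfolding pre_def using that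
      using sum.atLeastLessThan_concat[of 0 1 j g] by simp
    moreover have "0 \<le> (\<Sum>l\<in>{1..<j}. g l)" using gnn that by auto
    moreover have "1 \<le> g 0" using g1' that by auto
    ultimately show ?thesis by simp
  qed
  have suf_pos: "1 \<le> suf j" if "j < N - 1" for j
  proof -
    have "suf j = g j + (\<Sum>l\<in>{Suc j..<N - 1}. g l)" unfolding suf_def using that
      by (simp add: sum.atLeast_Suc_lessThan)
    moreover have "0 \<le> (\<Sum>l\<in>{Suc j..<N - 1}. g l)" using gnn that by auto
    moreover have "1 \<le> g j" using g1' that by auto
    ultimately show ?thesis by simp
  qed
  have ss: "same_seg wt \<eta> P i j \<longleftrightarrow> 1 \<le> i \<and> i < N - 1 \<and> 1 \<le> j \<and> j < N - 1 \<and>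
     ((pre i \<le> tot / 2 \<and> pre j \<le> tot / 2 \<and> \<lfloor>log (1 + \<eta>) (pre i)\<rfloor> = \<lfloor>log (1 + \<eta>) (pre j)\<rfloor>) \<or>
      (suf i < tot / 2 \<and> suf j < tot / 2 \<and> \<lfloor>log (1 + \<eta>) (suf i)\<rfloor> = \<lfloor>log (1 + \<eta>) (suf j)\<rfloor>))" for i j
  proof -
    have "i < N - 1 \<Longrightarrow> j < N - 1 \<Longrightarrow> ?thesis"
      unfolding same_seg_def N_def[symmetric] wtot using wpre[of i] wpre[of j] wsuf[of i] wsuf[of j] by auto
    then show ?thesis unfolding same_seg_def N_def by auto
  qed
  have Csub: "C \<subseteq> {1..<N - 1}" unfolding C ss by auto
  have fin: "finite C" using Csub finite_subset by blast
  have i0C: "i0 \<in> C"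
    unfolding C ss using i0 ps[of i0] N_def by auto
  have ne: "C \<noteq> {}" using i0C by auto
  define a where "a = Min C"
  define b where "b = Max C"
  have aC: "a \<in> C" and bC: "b \<in> C" using fin ne a_def b_def by auto
  have ab: "a \<le> b" using fin aC unfolding b_def by auto
  have a1: "1 \<le> a" and bN: "b < N - 1" using aC bC Csub by auto
  have amin: "a \<le> j" if "j \<in> C" for j using fin that a_def by auto
  have sub: "wlen wt (subpath P a b) = pre b - pre a"
    using wlen_subpath[of a b P wt] ab bN pmono[OF ab] unfolding g_def N_def by auto
  have B: "1 + \<eta> > 1" using eta by simp
  have "\<exists>Lm. pre b - pre a < \<eta> * Lm \<and> (\<forall>j. a \<le> j \<and> j \<le> b \<longrightarrow> Lm \<le> min (pre j) (suf j))"
  proof (cases "pre i0 \<le> tot / 2")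
    case True
    have first: "pre j \<le> tot / 2 \<and> \<lfloor>log (1 + \<eta>) (pre i0)\<rfloor> = \<lfloor>log (1 + \<eta>) (pre j)\<rfloor>" if "j \<in> C" for j
    proof -
      have "\<not> suf i0 < tot / 2" using ps[of i0] i0 True unfolding N_def by auto
      then show ?thesis using that unfolding C ss by auto
    qed
    have pa: "0 < pre a" using pre_pos[of a] a1 bN ab by auto
    have pab: "pre a \<le> pre b" using pmono[OF ab] gnn[of b a] bN by auto
    have fl: "\<lfloor>log (1 + \<eta>) (pre a)\<rfloor> = \<lfloor>log (1 + \<eta>) (pre b)\<rfloor>" using first[OF aC] first[OF bC] by simp
    have "pre b - pre a < (1 + \<eta> - 1) * pre a" by (rule floor_log_lemma[OF B pa pab fl])
    moreover have "pre a \<le> min (pre j) (suf j)" if "a \<le> j" "j \<le> b" for j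
    proof -
      have "pre a \<le> pre j" using pmono[OF that(1)] gnn[of j a] that bN by auto
      moreover have "pre j \<le> pre b" using pmono[OF that(2)] gnn[of b j] that bN by auto
      moreover have "suf j = tot - pre j" using ps[of j] that bN by auto
      moreover have "pre b \<le> tot / 2" using first[OF bC] by auto
      ultimately show ?thesis by auto
    qed
    ultimately show ?thesis by (intro exI[of _ "pre a"]) auto
  next
    case False
    have second: "suf j < tot / 2 \<and> \<lfloor>log (1 + \<eta>) (suf i0)\<rfloor> = \<lfloor>log (1 + \<eta>) (suf j)\<rfloor>" if "j \<in> C" for j
      using that False unfolding C ss by auto
    have sb: "0 < suf b" using suf_pos[of b] bN by auto
    have sba: "suf b \<le> suf a" using pmono[OF ab] gnn[of b a] bN ps[of a] ps[of b] ab by auto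
    have fl: "\<lfloor>log (1 + \<eta>) (suf b)\<rfloor> = \<lfloor>log (1 + \<eta>) (suf a)\<rfloor>" using second[OF aC] second[OF bC] by simp
    have "suf a - suf b < (1 + \<eta> - 1) * suf b" by (rule floor_log_lemma[OF B sb sba fl])
    moreover have "suf a - suf b = pre b - pre a" using ps[of a] ps[of b] ab bN by auto
    moreover have "suf b \<le> min (pre j) (suf j)" if "a \<le> j" "j \<le> b" for j
    proof -
      have "pre a \<le> pre j" using pmono[OF that(1)] gnn[of j a] that bN by auto
      moreover have "pre j \<le> pre b" using pmono[OF that(2)] gnn[of b j] that bN by auto
      moreover have "suf j = tot - pre j" using ps[of j] that bN by auto
      moreover have "suf b = tot - pre b" using ps[of b] bN by auto
      moreover have "suf a = tot - pre a" using ps[of a] ab bN by auto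
      moreover have "suf a < tot / 2" using second[OF aC] by auto
      ultimately show ?thesis by auto
    qed
    ultimately show ?thesis by (intro exI[of _ "suf b"]) auto
  qed
  then obtain Lm where Lm: "pre b - pre a < \<eta> * Lm" "\<forall>j. a \<le> j \<and> j \<le> b \<longrightarrow> Lm \<le> min (pre j) (suf j)" by blast
  have "\<forall>j. a \<le> j \<and> j \<le> b \<longrightarrow> Lm \<le> min (wlen wt (take (Suc j) P)) (wlen wt (drop j P))"
    using Lm(2) wpre wsuf bN by auto
  then show ?thesis using fin ne a1 ab bN Lm(1) sub unfolding a_def b_def N_def by auto
qed

lemma lev_props:
  assumes hp: "hpath V TC s d U p" and v: "v \<in> V"
  shows "1 \<le> level U p v \<and> level U p v \<le> p \<and> v \<in> U (level U p v) \<and> (\<forall>l. level U p v < l \<and> l \<le> p \<longrightarrow> v \<notin> U l)"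
proof -
  have h: "1 \<le> p" "U 1 = V" using hp unfolding hpath_def by auto
  let ?P = "\<lambda>l. 1 \<le> l \<and> l \<le> p \<and> v \<in> U l"
  have P1: "?P 1" using h v by auto
  have "?P (level U p v)" unfolding level_def by (rule GreatestI_nat[of _ 1 p]) (use P1 in auto)
  moreover have "v \<notin> U l" if "level U p v < l" "l \<le> p" for l
  proof
    assume "v \<in> U l"
    then have "l \<le> level U p v" unfolding level_def using that
      by (intro Greatest_le_nat[of _ l p]) (use \<open>level U p v < l\<close> \<open>?P (level U p v)\<close> in auto)
    then show False using that by auto
  qed
  ultimately show ?thesis by auto
qed

lemma not_in_next:
  assumes hp: "hpath V TC s d U p" and v: "v \<in> V" and j: "level U p v \<le> j" "j \<le> p"
  shows "v \<notin> U (Suc j)"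
proof (cases "j = p")
  case True then show ?thesis using hp unfolding hpath_def by auto
next
  case False then show ?thesis using lev_props[OF hp v] j by auto
qed

lemma Lev_sub:
  assumes hp: "hpath V TC s d U p" and j: "j \<le> p"
  shows "Lev V U p j \<subseteq> V - U (Suc j)"
  using not_in_next[OF hp _ _ j] unfolding Lev_def by auto

lemma sbound_pos: "sbound d c n \<ge> 1"
  unfolding sbound_def by (simp add: mult_nonneg_nonneg)

lemma Wseq_sub:
  assumes G: "wgraph V E wt W" and covers: "fixed_covers V E wt TC" and s: "s \<ge> 0" and UV: "Ui \<subseteq> V"
  shows "Wseq TC s Ui j \<subseteq> V"
proof (induction j)
  case 0 then show ?case by simp
next
  case (Suc j)
  let ?W = "Wseq TC s Ui j"
  have "Hi TC s ?W Ui \<subseteq> V"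
  proof
    fix v assume "v \<in> Hi TC s ?W Ui"
    then obtain x where x: "x \<in> Ui - ?W" and pd: "real (pdeg (TC ?W Ui x) (Ui - ?W) v) > s"
      unfolding Hi_def by auto
    have "pdeg (TC ?W Ui x) (Ui - ?W) v \<noteq> 0" using pd s by auto
    then have "card {e \<in> tedges (TC ?W Ui x). v \<in> e \<and> e \<subseteq> trunk (TC ?W Ui x) (Ui - ?W)} \<noteq> 0"
      unfolding pdeg_def by presburger
    then have "{e \<in> tedges (TC ?W Ui x). v \<in> e \<and> e \<subseteq> trunk (TC ?W Ui x) (Ui - ?W)} \<noteq> {}"
      by (metis card.empty)
    then obtain e where e: "e \<in> tedges (TC ?W Ui x)" "v \<in> e" by blast
    have WV: "?W \<subseteq> V" by (rule Suc.IH)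
    have "tree_cover V E wt ?W (Ui - ?W) (TC ?W Ui)" using covers WV UV unfolding fixed_covers_def by simp
    then have "\<forall>x\<in>Ui - ?W. is_tree (V - ?W) E (TC ?W Ui x) \<and> troot (TC ?W Ui x) = x"
      unfolding tree_cover_def by (elim conjE)
    then have "is_tree (V - ?W) E (TC ?W Ui x)" using x by simp
    then have "e \<in> E" using e unfolding is_tree_def by auto
    then obtain y z where "e = {y, z}" "y \<in> V" "z \<in> V" using wg_facts(3)[OF G] by blast
    then show "v \<in> V" using e by auto
  qed
  then show ?case using Suc.IH by simp
qed

lemma U_sub:
  assumes G: "wgraph V E wt W" and covers: "fixed_covers V E wt TC" and hp: "hpath V TC s d U p"
    and s: "s \<ge> 0"
  shows "1 \<le> i \<Longrightarrow> i \<le> Suc p \<Longrightarrow> U i \<subseteq> V"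
proof (induction i)
  case 0 then show ?case by simp
next
  case (Suc i)
  show ?case
  proof (cases "i = 0")
    case True then show ?thesis using hp unfolding hpath_def by auto
  next
    case False
    show ?thesis
    proof (cases "i < p")
      case True
      then have "hchild TC s d (U i) (U (Suc i))" using hp False unfolding hpath_def by auto
      then obtain j where "U (Suc i) = Wseq TC s (U i) j" unfolding hchild_def by auto
      moreover have "U i \<subseteq> V" using Suc False by auto
      ultimately show ?thesis using Wseq_sub[OF G covers s] by auto
    next
      case False
      then have "i = p" using Suc by auto
      then show ?thesis using hp unfolding hpath_def by auto
    qed
  qed
qed

lemma tc_tree:
  assumes "tree_cover V E wt R S C" "x \<in> S"
  shows "is_tree (V - R) E (C x) \<and> troot (C x) = x"
proof -
  have "\<forall>x\<in>S. is_tree (V - R) E (C x) \<and> troot (C x) = x" using assms(1) unfolding tree_cover_def by (elim conjE)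
  then show ?thesis using assms(2) by simp
qed

lemma tc_stretch:
  assumes "tree_cover V E wt R S C" "u \<in> S" "v \<in> V - R" "reach (V - R) E u v"
  shows "\<exists>x\<in>S. u \<in> tverts (C x) \<and> v \<in> tverts (C x) \<and>
           dep wt (C x) u + dep wt (C x) v \<le> (2 * kk V - 1) * dist (V - R) E wt u v"
proof -
  have "\<forall>u\<in>S. \<forall>v\<in>V - R. reach (V - R) E u v \<longrightarrow>
        (\<exists>x\<in>S. u \<in> tverts (C x) \<and> v \<in> tverts (C x) \<and>
           dep wt (C x) u + dep wt (C x) v \<le> (2 * kk V - 1) * dist (V - R) E wt u v)"
    using assms(1) unfolding tree_cover_def by (elim conjE)
  then show ?thesis using assms(2-4) by blast
qed

lemma core:
  assumes G: "wgraph V E wt W" and covers: "fixed_covers V E wt TC" and hp: "hpath V TC s d U p"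
    and s: "s \<ge> 0" and DV: "D \<subseteq> V" and kpos: "2 * kk V - 1 > 0"
    and far: "far_away V E wt D (VH TC U p D s0 t0) \<epsilon>1 P"
    and ab: "a' \<le> b'" "b' < length P"
    and Qsp: "is_sp (V - D) E wt (P ! a') (P ! b') (subpath P a' b')"
    and bound: "\<forall>j. a' \<le> j \<and> j \<le> b' \<longrightarrow> 0 < j \<and> j < length P - 1 \<and>
        (4 * kk V - 2) * wlen wt (subpath P a' b') < \<epsilon>1 * min (wlen wt (take (Suc j) P)) (wlen wt (drop j P))"
  shows "\<exists>i. 1 \<le> i \<and> i \<le> p \<and> reach (Lev V U p i) E (P ! a') (P ! b') \<and>
           subpath P a' b' = sp (Lev V U p i) E wt (P ! a') (P ! b')"
proof -
  define Q where "Q = subpath P a' b'"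
  define x' where "x' = P ! a'"
  define y' where "y' = P ! b'"
  have nn: "\<forall>e\<in>E. 0 \<le> wt e" using wg_facts(5)[OF G] .
  have Qw: "walk_betw (V - D) E x' y' Q" using Qsp unfolding is_sp_def Q_def x'_def y'_def by blast
  have wQ: "walk (V - D) E Q" using Qw by (simp add: walk_betw_def)
  have QV: "set Q \<subseteq> V - D" using wQ by (simp add: walk_def)
  have Qne: "Q \<noteq> []" using wQ by auto
  define L where "L = level U p ` set Q"
  have Lfin: "finite L" and Lne: "L \<noteq> {}" using Qne unfolding L_def by auto
  define i where "i = Max L"
  obtain z where zQ: "z \<in> set Q" and zi: "level U p z = i" using Max_in[OF Lfin Lne] unfolding i_def L_def by auto
  have zV: "z \<in> V" using zQ QV by auto
  have i1: "1 \<le> i" and ip: "i \<le> p" and zU: "z \<in> U i" using lev_props[OF hp zV] zi by auto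
  have zR: "z \<notin> U (Suc i)" using not_in_next[OF hp zV _ ip] zi by auto
  have zD: "z \<notin> D" using zQ QV by auto
  have QLev: "set Q \<subseteq> Lev V U p i"
  proof
    fix y assume y: "y \<in> set Q"
    then have "level U p y \<le> i" unfolding i_def L_def using Lfin by auto
    then show "y \<in> Lev V U p i" using y QV unfolding Lev_def by auto
  qed
  have LevV: "Lev V U p i \<subseteq> V" unfolding Lev_def by auto
  have QwL: "walk_betw (Lev V U p i) E x' y' Q" using Qw walk_mono[OF _ QLev] by (auto simp: walk_betw_def)
  have reachQ: "reach (Lev V U p i) E x' y'" using QwL unfolding reach_def by blast
  show ?thesis
  proof (cases "is_sp (Lev V U p i) E wt x' y' Q")
    case True
    then have "sp (Lev V U p i) E wt x' y' = Q" using sp_eq[OF G LevV] by blast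
    then show ?thesis using i1 ip reachQ unfolding Q_def x'_def y'_def by auto
  next
    case False
    then obtain S where S: "walk_betw (Lev V U p i) E x' y' S" and SQ: "wlen wt S < wlen wt Q"
      using QwL unfolding is_sp_def by force
    have wS: "walk (Lev V U p i) E S" using S by (simp add: walk_betw_def)
    have "\<exists>f\<in>set S. f \<in> D"
    proof (rule ccontr)
      assume "\<not> ?thesis"
      then have "set S \<subseteq> V - D" using wS LevV unfolding walk_def by auto
      then have "walk_betw (V - D) E x' y' S" using S walk_mono by (auto simp: walk_betw_def)
      then have "wlen wt Q \<le> wlen wt S" using Qsp unfolding is_sp_def Q_def x'_def y'_def by blast
      then show False using SQ by simp
    qed
    then obtain kf where kf: "kf < length S" and fD: "S ! kf \<in> D" by (auto simp: in_set_conv_nth)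
    define f where "f = S ! kf"
    obtain kz where kz: "kz < length Q" and zkz: "Q ! kz = z" using zQ by (auto simp: in_set_conv_nth)
    have lenQ: "length Q = b' - a' + 1" using subpath_len[OF ab] Q_def by simp
    define jz where "jz = a' + kz"
    have jz: "a' \<le> jz" "jz \<le> b'" using kz lenQ jz_def ab by auto
    have Pjz: "P ! jz = z" using subpath_nth[OF ab, of kz] kz lenQ zkz Q_def jz_def by auto
    define R where "R = U (Suc i)"
    have UiV: "U i \<subseteq> V" using U_sub[OF G covers hp s] i1 ip by auto
    have RV: "R \<subseteq> V" using U_sub[OF G covers hp s, of "Suc i"] ip R_def by auto
    have TCov: "tree_cover V E wt R (U i - R) (TC R (U i))"
      using covers RV UiV unfolding fixed_covers_def by simp
    have LevR: "Lev V U p i \<subseteq> V - R" using Lev_sub[OF hp ip] R_def by simp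
    have fL: "f \<in> Lev V U p i" using walk_nth[OF wS kf] f_def by simp
    have fVR: "f \<in> V - R" using fL LevR by auto
    have t1: "walk_betw (Lev V U p i) E x' z (take (Suc kz) Q)"
      using walk_take[of _ _ Q "Suc kz"] QwL kz zkz Qne by (auto simp: walk_betw_def last_take_Suc)
    have t2: "walk_betw (Lev V U p i) E x' f (take (Suc kf) S)"
      using walk_take[of _ _ S "Suc kf"] S kf f_def by (auto simp: walk_betw_def last_take_Suc)
    define zf where "zf = pcat (rev (take (Suc kz) Q)) (take (Suc kf) S)"
    have zfw: "walk_betw (Lev V U p i) E z f zf"
      unfolding zf_def by (rule walk_betw_pcat[OF walk_betw_rev[OF t1] t2])
    have zfR: "walk_betw (V - R) E z f zf"
      using zfw walk_mono[of _ E zf "V - R"] LevR by (auto simp: walk_betw_def walk_def)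
    have wlzf: "wlen wt zf = wlen wt (take (Suc kz) Q) + wlen wt (take (Suc kf) S)"
    proof -
      have "rev (take (Suc kz) Q) \<noteq> []" "take (Suc kf) S \<noteq> []" using Qne kf by auto
      moreover have "last (rev (take (Suc kz) Q)) = hd (take (Suc kf) S)"
        using t1 t2 by (auto simp: walk_betw_def last_rev)
      ultimately show ?thesis unfolding zf_def by (simp add: wlen_pcat wlen_rev)
    qed
    have "wlen wt (take (Suc kz) Q) \<le> wlen wt Q" using wlen_take_le[OF wQ nn] .
    moreover have "wlen wt (take (Suc kf) S) \<le> wlen wt S" using wlen_take_le[OF wS nn] .
    ultimately have zf2: "wlen wt zf < 2 * wlen wt Q" using wlzf SQ by simp
    have dzf: "dist (V - R) E wt z f \<le> wlen wt zf" by (rule dist_le[OF nn zfR])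
    have rzf: "reach (V - R) E z f" using zfR unfolding reach_def by blast
    have zS: "z \<in> U i - R" using zU zR R_def by simp
    obtain x where xS: "x \<in> U i - R" and zT: "z \<in> tverts (TC R (U i) x)" and fT: "f \<in> tverts (TC R (U i) x)"
      and st: "dep wt (TC R (U i) x) z + dep wt (TC R (U i) x) f \<le> (2 * kk V - 1) * dist (V - R) E wt z f"
      using tc_stretch[OF TCov zS fVR rzf] by blast
    define T where "T = TC R (U i) x"
    have Tt: "is_tree (V - R) E T" and Tr: "troot T = x" using tc_tree[OF TCov xS] T_def by auto
    have wnnT: "\<forall>e\<in>tedges T. 0 \<le> wt e" using tree_facts(7)[OF Tt] nn by auto
    obtain f' w' q where f'D: "f' \<in> D" and f'T: "f' \<in> tverts T" and w'N: "w' \<in> NT T (U i - R) f'"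
      and w'D: "w' \<notin> D" and q: "walk_betw (tverts T - D) (tedges T) z w' q"
      and ql: "wlen wt q \<le> dep wt T z + dep wt T f"
    proof -
      have "troot T \<in> U i - R" using Tr xS by simp
      moreover have "z \<in> tverts T" "f \<in> tverts T" "f \<in> D" using zT fT fD f_def T_def by auto
      ultimately have "\<exists>f'\<in>D. \<exists>w'. f' \<in> tverts T \<and> w' \<in> NT T (U i - R) f' \<and> w' \<notin> D \<and>
           (\<exists>q. walk_betw (tverts T - D) (tedges T) z w' q \<and> wlen wt q \<le> dep wt T z + dep wt T f)"
        using tree_D[OF Tt wnnT, of "U i - R" z D f] zS zD by blast
      then show ?thesis using that by blast
    qed
    have "(i, x) \<in> tidx U p" using i1 ip xS R_def unfolding tidx_def by auto
    then have "w' \<in> Nf TC U p f'" unfolding Nf_def using f'T w'N T_def R_def by blast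
    then have w'H: "w' \<in> VH TC U p D s0 t0" unfolding VH_def using f'D w'D by blast
    have TV: "tverts T - D \<subseteq> V - D" using tree_facts(6)[OF Tt] by auto
    have wq1: "walk (tverts T - D) E q" using walk_edges_mono[OF _ tree_facts(7)[OF Tt]] q
      by (auto simp: walk_betw_def)
    have "set q \<subseteq> V - D" using wq1 TV by (auto simp: walk_def)
    then have "walk (V - D) E q" using walk_mono[OF wq1] by blast
    then have qw: "walk_betw (V - D) E z w' q" using q by (auto simp: walk_betw_def)
    have rzw: "reach (V - D) E z w'" using qw unfolding reach_def by blast
    have "dist (V - D) E wt z w' \<le> wlen wt q" by (rule dist_le[OF nn qw])
    also have "\<dots> \<le> (2 * kk V - 1) * dist (V - R) E wt z f" using ql st T_def by simp
    also have "\<dots> \<le> (2 * kk V - 1) * (2 * wlen wt Q)"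
      using dzf zf2 kpos by (intro mult_left_mono) auto
    also have "\<dots> = (4 * kk V - 2) * wlen wt Q" by (simp add: algebra_simps)
    also have "\<dots> < \<epsilon>1 * min (wlen wt (take (Suc jz) P)) (wlen wt (drop jz P))"
      using bound jz Q_def by blast
    finally have dd: "dist (V - D) E wt (P ! jz) w' \<le> \<epsilon>1 * min (wlen wt (take (Suc jz) P)) (wlen wt (drop jz P))"
      using Pjz by simp
    have "0 < jz" "jz < length P - 1" using bound jz by auto
    then show ?thesis using far dd rzw w'H Pjz unfolding far_away_def by blast
  qed
qed

lemma kk_gt: assumes "card V \<ge> 3" shows "kk V > 1/2"
proof -
  have "ln (inverse (3::real)) \<le> inverse 3 - 1" by (rule ln_le_minus_one) simp
  moreover have "ln (inverse (3::real)) = - ln 3" by (rule ln_inverse)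
  ultimately have l3: "ln (3::real) \<ge> 2/3" by simp
  have "ln (3::real) \<le> ln (real (card V))" using assms by simp
  then show ?thesis unfolding kk_def using l3 by simp
qed

lemma sp_single:
  assumes G: "wgraph V E wt W" and XV: "X \<subseteq> V" and x: "x \<in> X"
  shows "sp X E wt x x = [x]"
proof (rule sp_eq[OF G XV])
  show "is_sp X E wt x x [x]" unfolding is_sp_def walk_betw_def
    using x wlen_nonneg wg_facts(5)[OF G] by (auto simp: walk_betw_def)
qed

lemma pcat_single: "q \<noteq> [] \<Longrightarrow> hd q = x \<Longrightarrow> pcat [x] q = q"
  unfolding pcat_def by (cases q) auto

lemma subpath_split:
  assumes "a \<le> m" "m \<le> b" "b < length P"
  shows "subpath P a b = pcat (subpath P a m) (subpath P m b)"
proof -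
  have d: "drop (Suc m) P = drop (m - a + 1) (drop a P)" using assms by simp
  have "pcat (subpath P a m) (subpath P m b) = take (m - a + 1) (drop a P) @ take (b - m) (drop (Suc m) P)"
    unfolding pcat_def subpath_def by (simp add: tl_take drop_Suc tl_drop)
  also have "\<dots> = take (m - a + 1 + (b - m)) (drop a P)" unfolding d take_add by simp
  also have "m - a + 1 + (b - m) = b - a + 1" using assms by simp
  finally show ?thesis unfolding subpath_def by simp
qed

lemma pcat_struct:
  assumes ne1: "p1 \<noteq> []" and ne2: "p2 \<noteq> []" and lh: "last p1 = hd p2"
  defines "m \<equiv> length p1 - 1"
  shows "length (pcat p1 p2) = length p1 + length p2 - 1"
    and "j \<le> m \<Longrightarrow> pcat p1 p2 ! j = p1 ! j"
    and "m \<le> j \<Longrightarrow> j < length (pcat p1 p2) \<Longrightarrow> pcat p1 p2 ! j = p2 ! (j - m)"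
    and "a \<le> b \<Longrightarrow> b \<le> m \<Longrightarrow> subpath (pcat p1 p2) a b = subpath p1 a b"
    and "m \<le> a \<Longrightarrow> subpath (pcat p1 p2) a b = subpath p2 (a - m) (b - m)"
proof -
  have bl: "pcat p1 p2 = butlast p1 @ p2"
  proof -
    have "p1 = butlast p1 @ [last p1]" using ne1 by simp
    moreover have "p2 = hd p2 # tl p2" using ne2 by simp
    ultimately show ?thesis unfolding pcat_def using lh by (metis append.assoc append_Cons append_Nil)
  qed
  have lb: "length (butlast p1) = m" unfolding m_def by simp
  have "0 < length p1" using ne1 by simp
  moreover have "length (butlast p1 @ p2) = m + length p2" using lb by simp
  ultimately show "length (pcat p1 p2) = length p1 + length p2 - 1" unfolding bl m_def by arith
  show "j \<le> m \<Longrightarrow> pcat p1 p2 ! j = p1 ! j"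
  proof -
    assume j: "j \<le> m"
    show ?thesis
    proof (cases "j < m")
      case True then show ?thesis unfolding bl using lb by (simp add: nth_append nth_butlast)
    next
      case False
      then have "j = m" using j by simp
      then show ?thesis unfolding bl using lb lh ne1 ne2 by (simp add: nth_append last_conv_nth hd_conv_nth m_def)
    qed
  qed
  show "m \<le> j \<Longrightarrow> j < length (pcat p1 p2) \<Longrightarrow> pcat p1 p2 ! j = p2 ! (j - m)"
    unfolding bl using lb by (simp add: nth_append)
  show "a \<le> b \<Longrightarrow> b \<le> m \<Longrightarrow> subpath (pcat p1 p2) a b = subpath p1 a b"
  proof -
    assume ab: "a \<le> b" "b \<le> m"
    have "0 < length p1" using ne1 by simp
    then have "Suc b \<le> length p1" using ab unfolding m_def by arith
    then show ?thesis unfolding subpath_def pcat_def using ab by simp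
  qed
  show "m \<le> a \<Longrightarrow> subpath (pcat p1 p2) a b = subpath p2 (a - m) (b - m)"
    unfolding subpath_def bl using lb by (simp add: drop_append)
qed

lemma reach_in: "reach X F x y \<Longrightarrow> x \<in> X"
  unfolding reach_def walk_betw_def walk_def by (auto simp: hd_conv_nth)

theorem theorem4p9:
  fixes V :: "'a set" and E :: "'a set set" and wt :: "'a set \<Rightarrow> real" and W :: real
    and TC :: "'a set \<Rightarrow> 'a set \<Rightarrow> 'a \<Rightarrow> 'a tree"
    and d :: nat and c :: real and D :: "'a set"
    and U :: "nat \<Rightarrow> 'a set" and p :: nat and s0 t0 u v w :: 'a
    and \<epsilon> \<epsilon>1 \<epsilon>5 :: real
  assumes G: "wgraph V E wt W"
    and covers: "fixed_covers V E wt TC"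
    and d2: "d \<ge> 2" and c1: "c \<ge> 1"
    and hp: "hpath V TC (sbound d c (card V)) d U p"
    and DV: "D \<subseteq> V" and Dcard: "card D \<le> d"
    and Dok: "D_ok TC (sbound d c (card V)) U p D"
    and s0t0: "s0 \<in> V - D" "t0 \<in> V - D"
    and eps: "\<epsilon> > 0" "\<epsilon>1 = \<epsilon> / (2 + \<epsilon>)" "\<epsilon>5 = \<epsilon>1 / (4 * kk V - 2)"
    and uvw: "u \<in> V - D" "v \<in> V - D" "w \<in> V - D"
    and conn: "reach (V - D) E u v" "reach (V - D) E v w"
    and far: "far_away V E wt D (VH TC U p D s0 t0) \<epsilon>1
                (pcat (sp (V - D) E wt u v) (sp (V - D) E wt v w))"
  shows "seg_bipath V E wt U p \<epsilon>5 (pcat (sp (V - D) E wt u v) (sp (V - D) E wt v w))"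
proof -
  note nn = wg_facts(5)[OF G]
  have VDV: "V - D \<subseteq> V" by auto
  define \<pi>1 where "\<pi>1 = sp (V - D) E wt u v"
  define \<pi>2 where "\<pi>2 = sp (V - D) E wt v w"
  define P where "P = pcat \<pi>1 \<pi>2"
  have s1: "is_sp (V - D) E wt u v \<pi>1" using sp_is_sp[OF G VDV conn(1)] \<pi>1_def by simp
  have s2: "is_sp (V - D) E wt v w \<pi>2" using sp_is_sp[OF G VDV conn(2)] \<pi>2_def by simp
  have w1: "walk_betw (V - D) E u v \<pi>1" and w2: "walk_betw (V - D) E v w \<pi>2"
    using s1 s2 by (auto simp: is_sp_def)
  have ne1: "\<pi>1 \<noteq> []" and ne2: "\<pi>2 \<noteq> []" using w1 w2 by (auto simp: walk_betw_def)
  have lh: "last \<pi>1 = hd \<pi>2" using w1 w2 by (auto simp: walk_betw_def)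
  define m where "m = length \<pi>1 - 1"
  note ps = pcat_struct[OF ne1 ne2 lh, folded m_def P_def]
  have wP: "walk_betw (V - D) E u w P" unfolding P_def by (rule walk_betw_pcat[OF w1 w2])
  have g1: "\<forall>l. Suc l < length P \<longrightarrow> 1 \<le> wt {P ! l, P ! Suc l}"
    using walk_edge[of "V - D" E P] wP wg_facts(4)[OF G] by (auto simp: walk_betw_def)
  have kh: "kk V > 1/2" using kk_gt wg_facts(2)[OF G] by blast
  have kpos: "2 * kk V - 1 > 0" using kh by simp
  have k4: "4 * kk V - 2 > 0" using kh by simp
  have e1: "\<epsilon>1 > 0" using eps by simp
  have eta: "\<epsilon>5 > 0" using eps(3) e1 k4 by simp
  have e15: "(4 * kk V - 2) * \<epsilon>5 = \<epsilon>1" using eps(3) k4 by simp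
  have sb: "sbound d c (card V) \<ge> 0" using sbound_pos[of d c "card V"] by simp
  have farP: "far_away V E wt D (VH TC U p D s0 t0) \<epsilon>1 P" using far unfolding P_def \<pi>1_def \<pi>2_def .
  have "seg_bipath V E wt U p \<epsilon>5 P"
    unfolding seg_bipath_def
  proof
    fix C assume "C \<in> segments wt \<epsilon>5 P"
    then obtain i0 where i0: "1 \<le> i0" "i0 < length P - 1" and Ceq: "C = {j. same_seg wt \<epsilon>5 P i0 j}"
      unfolding segments_def by blast
    note sl = seg_lemma[OF eta g1 i0 Ceq]
    define a where "a = Min C"
    define b where "b = Max C"
    have a1: "1 \<le> a" and ab: "a \<le> b" and bN: "b < length P - 1" using sl a_def b_def by auto
    obtain Lm where Lm1: "wlen wt (subpath P a b) < \<epsilon>5 * Lm"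
      and Lm2: "\<forall>j. a \<le> j \<and> j \<le> b \<longrightarrow> Lm \<le> min (wlen wt (take (Suc j) P)) (wlen wt (drop j P))"
      using sl unfolding a_def[symmetric] b_def[symmetric] by blast
    have bnd: "\<forall>j. a' \<le> j \<and> j \<le> b' \<longrightarrow> 0 < j \<and> j < length P - 1 \<and>
        (4 * kk V - 2) * wlen wt (subpath P a' b') < \<epsilon>1 * min (wlen wt (take (Suc j) P)) (wlen wt (drop j P))"
      if ab': "a \<le> a'" "a' \<le> b'" "b' \<le> b" for a' b'
    proof (intro allI impI conjI)
      fix j assume j: "a' \<le> j \<and> j \<le> b'"
      show "0 < j" using j ab' a1 by auto
      show "j < length P - 1" using j ab' bN by auto
      have b'l: "b' < length P" and bl: "b < length P" using ab' bN by auto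
      have "(\<Sum>l\<in>{a'..<b'}. wt {P ! l, P ! Suc l}) \<le> (\<Sum>l\<in>{a..<b}. wt {P ! l, P ! Suc l})"
        using ab' bN g1 by (intro sum_mono2) (auto intro: order.trans[OF zero_le_one])
      then have "wlen wt (subpath P a' b') \<le> wlen wt (subpath P a b)"
        using wlen_subpath[OF ab'(2) b'l, of wt] wlen_subpath[OF ab bl, of wt] by simp
      then have "(4 * kk V - 2) * wlen wt (subpath P a' b') \<le> (4 * kk V - 2) * wlen wt (subpath P a b)"
        using k4 by (intro mult_left_mono) auto
      also have "\<dots> < (4 * kk V - 2) * (\<epsilon>5 * Lm)" using Lm1 k4 by (intro mult_strict_left_mono) auto
      also have "\<dots> = \<epsilon>1 * Lm" using e15 by (simp add: algebra_simps)
      also have "\<dots> \<le> \<epsilon>1 * min (wlen wt (take (Suc j) P)) (wlen wt (drop j P))"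
        using Lm2 j ab' e1 by (intro mult_left_mono) auto
      finally show "(4 * kk V - 2) * wlen wt (subpath P a' b') < \<epsilon>1 * min (wlen wt (take (Suc j) P)) (wlen wt (drop j P))" .
    qed
    have core': "\<exists>i. 1 \<le> i \<and> i \<le> p \<and> reach (Lev V U p i) E (P ! a') (P ! b') \<and>
           subpath P a' b' = sp (Lev V U p i) E wt (P ! a') (P ! b')"
      if ab': "a \<le> a'" "a' \<le> b'" "b' \<le> b" and spq: "is_sp (V - D) E wt (P ! a') (P ! b') (subpath P a' b')" for a' b'
      using core[OF G covers hp sb DV kpos farP ab'(2) _ spq bnd[OF ab']] ab' bN by auto
    have lenP: "length P = length \<pi>1 + length \<pi>2 - 1" using ps(1) .
    have spP1: "is_sp (V - D) E wt (P ! a') (P ! b') (subpath P a' b')" if "a' \<le> b'" "b' \<le> m" for a' b'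
    proof -
      have "b' < length \<pi>1" using that ne1 m_def by (cases \<pi>1) auto
      then have "is_sp (V - D) E wt (\<pi>1 ! a') (\<pi>1 ! b') (subpath \<pi>1 a' b')" using sub_sp[OF s1 nn that(1)] by simp
      then show ?thesis using ps(2)[of a'] ps(2)[of b'] ps(4)[OF that] that by simp
    qed
    have spP2: "is_sp (V - D) E wt (P ! a') (P ! b') (subpath P a' b')" if "m \<le> a'" "a' \<le> b'" "b' < length P" for a' b'
    proof -
      have "b' - m < length \<pi>2" using that lenP m_def ne1 by (cases \<pi>1) auto
      moreover have "a' - m \<le> b' - m" using that by simp
      ultimately have "is_sp (V - D) E wt (\<pi>2 ! (a' - m)) (\<pi>2 ! (b' - m)) (subpath \<pi>2 (a' - m) (b' - m))"
        using sub_sp[OF s2 nn] by simp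
      then show ?thesis using ps(3)[of a'] ps(3)[of b'] ps(5)[OF that(1)] that by simp
    qed
    have single: "\<exists>i j m'. 1 \<le> i \<and> i \<le> p \<and> 1 \<le> j \<and> j \<le> p \<and> a \<le> m' \<and> m' \<le> b \<and>
         reach (Lev V U p i) E (P ! a) (P ! m') \<and> reach (Lev V U p j) E (P ! m') (P ! b) \<and>
         subpath P a b = pcat (sp (Lev V U p i) E wt (P ! a) (P ! m')) (sp (Lev V U p j) E wt (P ! m') (P ! b))"
      if j: "1 \<le> j" "j \<le> p" "reach (Lev V U p j) E (P ! a) (P ! b)" "subpath P a b = sp (Lev V U p j) E wt (P ! a) (P ! b)" for j
    proof -
      have LV: "Lev V U p j \<subseteq> V" unfolding Lev_def by auto
      have aL: "P ! a \<in> Lev V U p j" using reach_in[OF j(3)] .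
      have "sp (Lev V U p j) E wt (P ! a) (P ! a) = [P ! a]" by (rule sp_single[OF G LV aL])
      moreover have "pcat [P ! a] (subpath P a b) = subpath P a b"
      proof -
        have bl: "b < length P" using bN by auto
        show ?thesis using subpath_ne[OF ab bl] subpath_hd[OF ab bl] by (intro pcat_single) auto
      qed
      ultimately show ?thesis using j aL ab reach_refl[OF aL]
        by (intro exI[of _ j] exI[of _ a]) auto
    qed
    have "\<exists>i j m'. 1 \<le> i \<and> i \<le> p \<and> 1 \<le> j \<and> j \<le> p \<and> a \<le> m' \<and> m' \<le> b \<and>
         reach (Lev V U p i) E (P ! a) (P ! m') \<and> reach (Lev V U p j) E (P ! m') (P ! b) \<and>
         subpath P a b = pcat (sp (Lev V U p i) E wt (P ! a) (P ! m')) (sp (Lev V U p j) E wt (P ! m') (P ! b))"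
    proof (cases "b \<le> m")
      case True
      obtain j where "1 \<le> j" "j \<le> p" "reach (Lev V U p j) E (P ! a) (P ! b)" "subpath P a b = sp (Lev V U p j) E wt (P ! a) (P ! b)"
        using core'[OF order.refl ab order.refl spP1[OF ab True]] by blast
      then show ?thesis using single by blast
    next
      case False
      show ?thesis
      proof (cases "m \<le> a")
        case True
        obtain j where "1 \<le> j" "j \<le> p" "reach (Lev V U p j) E (P ! a) (P ! b)" "subpath P a b = sp (Lev V U p j) E wt (P ! a) (P ! b)"
          using core'[OF order.refl ab order.refl spP2[OF True ab]] bN by fastforce
        then show ?thesis using single by blast
      next
        case False2: False
        have am: "a \<le> m" and mb: "m \<le> b" using False False2 by auto
        obtain i where i: "1 \<le> i" "i \<le> p" "reach (Lev V U p i) E (P ! a) (P ! m)" "subpath P a m = sp (Lev V U p i) E wt (P ! a) (P ! m)"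
          using core'[OF order.refl am mb spP1[OF am order.refl]] by blast
        obtain j where j: "1 \<le> j" "j \<le> p" "reach (Lev V U p j) E (P ! m) (P ! b)" "subpath P m b = sp (Lev V U p j) E wt (P ! m) (P ! b)"
          using core'[OF am mb order.refl spP2[OF order.refl mb]] bN by fastforce
        have bl: "b < length P" using bN by auto
        have "subpath P a b = pcat (subpath P a m) (subpath P m b)" using subpath_split[OF am mb bl] .
        then show ?thesis using i j am mb by (intro exI[of _ i] exI[of _ j] exI[of _ m]) auto
      qed
    qed
    then show "\<exists>i j m. 1 \<le> i \<and> i \<le> p \<and> 1 \<le> j \<and> j \<le> p \<and> Min C \<le> m \<and> m \<le> Max C \<and>
       reach (Lev V U p i) E (P ! Min C) (P ! m) \<and> reach (Lev V U p j) E (P ! m) (P ! Max C) \<and>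
       subpath P (Min C) (Max C) = pcat (sp (Lev V U p i) E wt (P ! Min C) (P ! m)) (sp (Lev V U p j) E wt (P ! m) (P ! Max C))"
      unfolding a_def b_def .
  qed
  then show ?thesis unfolding P_def \<pi>1_def \<pi>2_def .
qed

end
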